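(* Let $n\ge 2$ and let $X$ be a $\mathcal D$-subspace of $\mathbb P=PG(\mathbb E,\mathbb{F}_q)=PG(n^2-1,q)$. Then there exist two Desarguesian $(n-1)$-spreads $\mathcal D_1(X)$ and $\mathcal D_2(X)$ of $\mathbb P$ such that: (D1) $X\in\mathcal D_i(X)$ and $\mathcal R_i\subset\mathcal D_i(X)$ for $i=1,2$; (D2) for $i=1,2$ there is a linear collineation $\Xi_i$ of $\mathbb P$ fixing $\mathcal D_i(X)$ which induces a semilinear collineation $\tilde\Xi_i$ of order $n$ of $\Pi_{n-1}(\mathcal D_i(X))\cong PG(n-1,q^n)$ whose set of fixed points is exactly $\mathcal R_i$, and $\mathcal R_i$ is a subgeometry of $\Pi_{n-1}(\mathcal D_i(X))$ isomorphic to $PG(n-1,q)$. Moreover there exists an involutory collineation $\Phi$ of $\mathbb P$ such that (D3) $\Phi$ fixes $X$ pointwise, and (D4) $\mathcal D_1(X)^\Phi=\mathcal D_2(X)$.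
   Context: $\mathbb E=\mathrm{End}(\mathbb{F}_{q^n},\mathbb{F}_q)$; $\langle\varphi\rangle_q$ is the point of $\mathbb P$ defined by $\varphi\ne0$; $t_\lambda:x\mapsto\lambda x$. The Segre variety $\mathcal S_{n,n}$ is the set of points $\langle\varphi\rangle_q$ with $\varphi$ of rank 1; its maximal subspaces are $(n-1)$-dimensional and form two systems $\mathcal R_1,\mathcal R_2$, where $\mathcal R_1=\{\{\langle t_\alpha\circ\mathrm{Tr}\circ t_\lambda\rangle_q:\alpha\in\mathbb{F}_{q^n}^*\}:\lambda\in\mathbb{F}_{q^n}^*\}$ and $\mathcal R_2=\{\{\langle t_\lambda\circ\mathrm{Tr}\circ t_\alpha\rangle_q:\alpha\in\mathbb{F}_{q^n}^*\}:\lambda\in\mathbb{F}_{q^n}^*\}$, $\mathrm{Tr}$ the trace $\mathbb{F}_{q^n}\to\mathbb{F}_q$. $H(\mathcal S_{n,n})$ is the subgroup of $PGL(n^2,q)$ fixing each of $\mathcal R_1$ and $\mathcal R_2$. Let $\mathcal I=\{\langle t_\lambda\rangle_q:\lambda\in\mathbb{F}_{q^n}^*\}$, an $(n-1)$-dimensional subspace of $\mathbb P$; a $\mathcal D$-subspace of $\mathbb P$ is any subspace in the orbit of $\mathcal I$ under $H(\mathcal S_{n,n})$. An $(n-1)$-spread of $\mathbb P$ is a partition of its points into $(n-1)$-dimensional subspaces; it is Desarguesian if it arises as the set of subspaces $\{\langle\mathbf v\rangle_{q^n}\}$ viewed over $\mathbb F_q$ when the underlying $\mathbb F_q$-space is endowed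 with an $\mathbb F_{q^n}$-vector space structure. For a Desarguesian $(n-1)$-spread $\mathcal D$ of $\mathbb P$, $\Pi_{n-1}(\mathcal D)$ is the projective space $\cong PG(n-1,q^n)$ whose points are the elements of $\mathcal D$ and whose subspaces are the sets of spread elements contained in subspaces of $\mathbb P$ spanned by spread elements. A subgeometry isomorphic to $PG(n-1,q)$ of $PG(n-1,q^n)$ is the point set defined by an $\mathbb F_q$-subspace of dimension $n$ spanning the underlying $\mathbb F_{q^n}$-space. *)

theory Defs
  imports Main
begin

text \<open>Setting: the type 'a is the finite field F_{q^n} (CARD('a) = q^n), and
F_q is its subfield Kf q = {x. x^q = x}. The F_q-space E = End(F_{q^n},F_q)
is the set of F_q-linear maps 'a => 'a; points of P are the classes of
nonzero maps modulo nonzero F_q-scalars (represented as sets of maps).\<close>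

definition Kf :: "nat \<Rightarrow> 'a::{finite,field} set" where
  "Kf q = {x. x ^ q = x}"

definition kscal :: "'a::field \<Rightarrow> ('a \<Rightarrow> 'a) \<Rightarrow> ('a \<Rightarrow> 'a)" where
  "kscal c \<phi> = (\<lambda>x. c * \<phi> x)"

definition fadd :: "('a::field \<Rightarrow> 'a) \<Rightarrow> ('a \<Rightarrow> 'a) \<Rightarrow> ('a \<Rightarrow> 'a)" where
  "fadd \<phi> \<psi> = (\<lambda>x. \<phi> x + \<psi> x)"

definition fzero :: "'a::field \<Rightarrow> 'a" where
  "fzero = (\<lambda>x. 0)"

definition Emaps :: "nat \<Rightarrow> ('a::{finite,field} \<Rightarrow> 'a) set" where
  "Emaps q = {\<phi>. (\<forall>x y. \<phi> (x + y) = \<phi> x + \<phi> y) \<and> (\<forall>c\<in>Kf q. \<forall>x. \<phi> (c * x) = c * \<phi> x)}"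

definition pt :: "nat \<Rightarrow> ('a::{finite,field} \<Rightarrow> 'a) \<Rightarrow> ('a \<Rightarrow> 'a) set" where
  "pt q \<phi> = {kscal c \<phi> | c. c \<in> Kf q \<and> c \<noteq> 0}"

definition Points :: "nat \<Rightarrow> ('a::{finite,field} \<Rightarrow> 'a) set set" where
  "Points q = {pt q \<phi> | \<phi>. \<phi> \<in> Emaps q \<and> \<phi> \<noteq> fzero}"

definition Lines :: "nat \<Rightarrow> ('a::{finite,field} \<Rightarrow> 'a) set set set" where
  "Lines q = {{pt q (fadd (kscal a \<phi>) (kscal b \<psi>)) | a b. a \<in> Kf q \<and> b \<in> Kf q \<and> (a \<noteq> 0 \<or> b \<noteq> 0)}
      | \<phi> \<psi>. \<phi> \<in> Emaps q \<and> \<psi> \<in> Emaps q \<and> \<phi> \<noteq> fzero \<and> \<psi> \<noteq> fzero \<and> pt q \<phi> \<noteq> pt q \<psi>}"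

definition tr :: "nat \<Rightarrow> nat \<Rightarrow> 'a::{finite,field} \<Rightarrow> 'a" where
  "tr q n x = (\<Sum>i<n. x ^ (q ^ i))"

definition Iset :: "nat \<Rightarrow> ('a::{finite,field} \<Rightarrow> 'a) set set" where
  "Iset q = {pt q (\<lambda>x. l * x) | l. l \<noteq> 0}"

definition R1 :: "nat \<Rightarrow> nat \<Rightarrow> ('a::{finite,field} \<Rightarrow> 'a) set set set" where
  "R1 q n = {{pt q (\<lambda>x. a * tr q n (l * x)) | a. a \<noteq> 0} | l. l \<noteq> 0}"

definition R2 :: "nat \<Rightarrow> nat \<Rightarrow> ('a::{finite,field} \<Rightarrow> 'a) set set set" where
  "R2 q n = {{pt q (\<lambda>x. l * tr q n (a * x)) | a. a \<noteq> 0} | l. l \<noteq> 0}"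

text \<open>F_q-linear bijections of E (they induce the elements of PGL(n^2,q)).\<close>
definition klin_bij :: "nat \<Rightarrow> (('a::{finite,field} \<Rightarrow> 'a) \<Rightarrow> ('a \<Rightarrow> 'a)) \<Rightarrow> bool" where
  "klin_bij q f \<longleftrightarrow> bij_betw f (Emaps q) (Emaps q) \<and>
     (\<forall>\<phi>\<in>Emaps q. \<forall>\<psi>\<in>Emaps q. f (fadd \<phi> \<psi>) = fadd (f \<phi>) (f \<psi>)) \<and>
     (\<forall>c\<in>Kf q. \<forall>\<phi>\<in>Emaps q. f (kscal c \<phi>) = kscal c (f \<phi>))"

definition pimg :: "(('a \<Rightarrow> 'a) \<Rightarrow> ('a \<Rightarrow> 'a)) \<Rightarrow> ('a \<Rightarrow> 'a) set set \<Rightarrow> ('a \<Rightarrow> 'a) set set" where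
  "pimg f S = (\<lambda>p. f ` p) ` S"

definition simg :: "(('a \<Rightarrow> 'a) \<Rightarrow> ('a \<Rightarrow> 'a)) \<Rightarrow> ('a \<Rightarrow> 'a) set set set \<Rightarrow> ('a \<Rightarrow> 'a) set set set" where
  "simg f D = pimg f ` D"

text \<open>Elements of H(S_{n,n}): linear collineations fixing R1 and R2.\<close>
definition H_Segre :: "nat \<Rightarrow> nat \<Rightarrow> (('a::{finite,field} \<Rightarrow> 'a) \<Rightarrow> ('a \<Rightarrow> 'a)) \<Rightarrow> bool" where
  "H_Segre q n f \<longleftrightarrow> klin_bij q f \<and> simg f (R1 q n) = R1 q n \<and> simg f (R2 q n) = R2 q n"

definition D_subspace :: "nat \<Rightarrow> nat \<Rightarrow> ('a::{finite,field} \<Rightarrow> 'a) set set \<Rightarrow> bool" where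
  "D_subspace q n X \<longleftrightarrow> (\<exists>f. H_Segre q n f \<and> X = pimg f (Iset q))"

definition fstruct :: "nat \<Rightarrow> ('a::{finite,field} \<Rightarrow> ('a \<Rightarrow> 'a) \<Rightarrow> ('a \<Rightarrow> 'a)) \<Rightarrow> bool" where
  "fstruct q sm \<longleftrightarrow>
     (\<forall>a. \<forall>\<phi>\<in>Emaps q. sm a \<phi> \<in> Emaps q) \<and>
     (\<forall>a. \<forall>\<phi>\<in>Emaps q. \<forall>\<psi>\<in>Emaps q. sm a (fadd \<phi> \<psi>) = fadd (sm a \<phi>) (sm a \<psi>)) \<and>
     (\<forall>a b. \<forall>\<phi>\<in>Emaps q. sm (a + b) \<phi> = fadd (sm a \<phi>) (sm b \<phi>)) \<and>
     (\<forall>a b. \<forall>\<phi>\<in>Emaps q. sm (a * b) \<phi> = sm a (sm b \<phi>)) \<and>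
     (\<forall>\<phi>\<in>Emaps q. sm 1 \<phi> = \<phi>) \<and>
     (\<forall>c\<in>Kf q. \<forall>\<phi>\<in>Emaps q. sm c \<phi> = kscal c \<phi>)"

text \<open>The spread element <phi>_{q^n}, viewed as a set of points of P.\<close>
definition Fpt :: "nat \<Rightarrow> ('a::{finite,field} \<Rightarrow> ('a \<Rightarrow> 'a) \<Rightarrow> ('a \<Rightarrow> 'a)) \<Rightarrow> ('a \<Rightarrow> 'a) \<Rightarrow> ('a \<Rightarrow> 'a) set set" where
  "Fpt q sm \<phi> = {pt q (sm l \<phi>) | l. l \<noteq> 0}"

definition spread_of :: "nat \<Rightarrow> ('a::{finite,field} \<Rightarrow> ('a \<Rightarrow> 'a) \<Rightarrow> ('a \<Rightarrow> 'a)) \<Rightarrow> ('a \<Rightarrow> 'a) set set set" where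
  "spread_of q sm = {Fpt q sm \<phi> | \<phi>. \<phi> \<in> Emaps q \<and> \<phi> \<noteq> fzero}"

definition desarg_spread :: "nat \<Rightarrow> ('a::{finite,field} \<Rightarrow> 'a) set set set \<Rightarrow> bool" where
  "desarg_spread q D \<longleftrightarrow> (\<exists>sm. fstruct q sm \<and> D = spread_of q sm)"

fun lincomb :: "('s \<Rightarrow> ('a \<Rightarrow> 'a) \<Rightarrow> ('a \<Rightarrow> 'a)) \<Rightarrow> 's list \<Rightarrow> ('a::field \<Rightarrow> 'a) list \<Rightarrow> ('a \<Rightarrow> 'a)" where
  "lincomb sc (c # cs) (v # vs) = fadd (sc c v) (lincomb sc cs vs)"
| "lincomb sc _ _ = fzero"

definition Kspan :: "nat \<Rightarrow> ('a::{finite,field} \<Rightarrow> 'a) list \<Rightarrow> ('a \<Rightarrow> 'a) set" where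
  "Kspan q ws = {lincomb kscal cs ws | cs. length cs = length ws \<and> set cs \<subseteq> Kf q}"

definition Kindep :: "nat \<Rightarrow> ('a::{finite,field} \<Rightarrow> 'a) list \<Rightarrow> bool" where
  "Kindep q ws \<longleftrightarrow> (\<forall>cs. length cs = length ws \<and> set cs \<subseteq> Kf q \<and> lincomb kscal cs ws = fzero
      \<longrightarrow> set cs \<subseteq> {0})"

definition Fspans :: "('a::{finite,field} \<Rightarrow> ('a \<Rightarrow> 'a) \<Rightarrow> ('a \<Rightarrow> 'a)) \<Rightarrow> ('a \<Rightarrow> 'a) set \<Rightarrow> ('a \<Rightarrow> 'a) set \<Rightarrow> bool" where
  "Fspans sm W E \<longleftrightarrow> (\<forall>\<phi>\<in>E. \<exists>cs vs. length cs = length vs \<and> set vs \<subseteq> W \<and> \<phi> = lincomb sm cs vs)"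

text \<open>R is a subgeometry PG(n-1,q) of Pi_{n-1}(spread_of q sm): the point set defined
 by an n-dimensional F_q-subspace W of E (W = K-span of n K-independent vectors)
 that spans E over F_{q^n}.\<close>
definition subgeometry :: "nat \<Rightarrow> nat \<Rightarrow> ('a::{finite,field} \<Rightarrow> ('a \<Rightarrow> 'a) \<Rightarrow> ('a \<Rightarrow> 'a)) \<Rightarrow> ('a \<Rightarrow> 'a) set set set \<Rightarrow> bool" where
  "subgeometry q n sm R \<longleftrightarrow> (\<exists>ws. length ws = n \<and> set ws \<subseteq> Emaps q \<and> Kindep q ws \<and>
      Fspans sm (Kspan q ws) (Emaps q) \<and>
      R = {Fpt q sm w | w. w \<in> Kspan q ws \<and> w \<noteq> fzero})"

definition field_aut :: "('a::field \<Rightarrow> 'a) \<Rightarrow> bool" where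
  "field_aut \<sigma> \<longleftrightarrow> bij \<sigma> \<and> (\<forall>a b. \<sigma> (a + b) = \<sigma> a + \<sigma> b) \<and> (\<forall>a b. \<sigma> (a * b) = \<sigma> a * \<sigma> b)"

text \<open>The collineation of Pi_{n-1}(spread_of q sm) induced by f is semilinear:
 it is induced by a sigma-semilinear bijection g of the F_{q^n}-space E.\<close>
definition induced_semilinear :: "nat \<Rightarrow> ('a::{finite,field} \<Rightarrow> ('a \<Rightarrow> 'a) \<Rightarrow> ('a \<Rightarrow> 'a)) \<Rightarrow> (('a \<Rightarrow> 'a) \<Rightarrow> ('a \<Rightarrow> 'a)) \<Rightarrow> bool" where
  "induced_semilinear q sm f \<longleftrightarrow> (\<exists>\<sigma> g. field_aut \<sigma> \<and> bij_betw g (Emaps q) (Emaps q) \<and>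
      (\<forall>\<phi>\<in>Emaps q. \<forall>\<psi>\<in>Emaps q. g (fadd \<phi> \<psi>) = fadd (g \<phi>) (g \<psi>)) \<and>
      (\<forall>l. \<forall>\<phi>\<in>Emaps q. g (sm l \<phi>) = sm (\<sigma> l) (g \<phi>)) \<and>
      (\<forall>\<phi>\<in>Emaps q. \<phi> \<noteq> fzero \<longrightarrow> pimg f (Fpt q sm \<phi>) = Fpt q sm (g \<phi>)))"

definition cond_D2 :: "nat \<Rightarrow> nat \<Rightarrow> ('a::{finite,field} \<Rightarrow> 'a) set set set \<Rightarrow> ('a \<Rightarrow> 'a) set set set \<Rightarrow> bool" where
  "cond_D2 q n D R \<longleftrightarrow> (\<exists>sm. fstruct q sm \<and> D = spread_of q sm \<and>
      (\<exists>f. klin_bij q f \<and> simg f D = D \<and> induced_semilinear q sm f \<and>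
           (\<forall>S\<in>D. (pimg f ^^ n) S = S) \<and>
           (\<forall>k. 0 < k \<and> k < n \<longrightarrow> (\<exists>S\<in>D. (pimg f ^^ k) S \<noteq> S)) \<and>
           {S \<in> D. pimg f S = S} = R) \<and>
      subgeometry q n sm R)"

definition collineation :: "nat \<Rightarrow> (('a::{finite,field} \<Rightarrow> 'a) set \<Rightarrow> ('a \<Rightarrow> 'a) set) \<Rightarrow> bool" where
  "collineation q \<Phi> \<longleftrightarrow> bij_betw \<Phi> (Points q) (Points q) \<and> (\<forall>L\<in>Lines q. \<Phi> ` L \<in> Lines q)"

definition involutory_collineation :: "nat \<Rightarrow> (('a::{finite,field} \<Rightarrow> 'a) set \<Rightarrow> ('a \<Rightarrow> 'a) set) \<Rightarrow> bool" where
  "involutory_collineation q \<Phi> \<longleftrightarrow> collineation q \<Phi> \<and> (\<forall>x\<in>Points q. \<Phi> (\<Phi> x) = x) \<and>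
      (\<exists>x\<in>Points q. \<Phi> x \<noteq> x)"

end

theory Submission
  imports Defs "HOL-Computational_Algebra.Polynomial" "HOL-Computational_Algebra.Primes"
begin


fun lc :: "'a::field list \<Rightarrow> 'a list \<Rightarrow> 'a" where
  "lc (c # cs) (e # es) = c * e + lc cs es"
| "lc _ _ = 0"

definition subf :: "'a::field set \<Rightarrow> bool" where
  "subf K \<longleftrightarrow> 0 \<in> K \<and> 1 \<in> K \<and> (\<forall>x\<in>K. \<forall>y\<in>K. x + y \<in> K \<and> x * y \<in> K) \<and>
     (\<forall>x\<in>K. - x \<in> K \<and> inverse x \<in> K)"

definition spanK :: "'a::field set \<Rightarrow> 'a list \<Rightarrow> 'a set" where
  "spanK K es = {lc cs es | cs. length cs = length es \<and> set cs \<subseteq> K}"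

definition indepK :: "'a::field set \<Rightarrow> 'a list \<Rightarrow> bool" where
  "indepK K es \<longleftrightarrow> (\<forall>cs. length cs = length es \<and> set cs \<subseteq> K \<and> lc cs es = 0 \<longrightarrow> set cs \<subseteq> {0})"

lemma lc_diff:
  "length cs = length es \<Longrightarrow> length ds = length es \<Longrightarrow>
   lc cs es - lc ds es = lc (map2 (-) cs ds) es"
proof (induction es arbitrary: cs ds)
  case Nil then show ?case by simp
next
  case (Cons e es)
  obtain c cs' where c: "cs = c # cs'" using Cons.prems(1) by (cases cs) auto
  obtain d ds' where d: "ds = d # ds'" using Cons.prems(2) by (cases ds) auto
  have IH: "lc cs' es - lc ds' es = lc (map2 (-) cs' ds') es"
    using Cons.IH Cons.prems c d by simp
  show ?case unfolding c d by (simp add: IH[symmetric] algebra_simps)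
qed

lemma lc_add:
  "length cs = length es \<Longrightarrow> length ds = length es \<Longrightarrow>
   lc cs es + lc ds es = lc (map2 (+) cs ds) es"
proof (induction es arbitrary: cs ds)
  case Nil then show ?case by simp
next
  case (Cons e es)
  obtain c cs' where c: "cs = c # cs'" using Cons.prems(1) by (cases cs) auto
  obtain d ds' where d: "ds = d # ds'" using Cons.prems(2) by (cases ds) auto
  have IH: "lc cs' es + lc ds' es = lc (map2 (+) cs' ds') es"
    using Cons.IH Cons.prems c d by simp
  show ?case unfolding c d by (simp add: IH[symmetric] algebra_simps)
qed

lemma lc_scale: "lc (map ((*) a) cs) es = a * lc cs es"
proof (induction cs arbitrary: es)
  case Nil then show ?case by simp
next
  case (Cons c cs) then show ?case by (cases es) (auto simp: algebra_simps)
qed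

lemma subf_diff: "subf K \<Longrightarrow> x \<in> K \<Longrightarrow> y \<in> K \<Longrightarrow> x - y \<in> K"
  unfolding subf_def by (metis diff_conv_add_uminus)

lemma set_map2_sub:
  assumes "\<And>x y. x \<in> K \<Longrightarrow> y \<in> K \<Longrightarrow> f x y \<in> K"
  shows "set cs \<subseteq> K \<Longrightarrow> set ds \<subseteq> K \<Longrightarrow> set (map2 f cs ds) \<subseteq> K"
proof (induction cs arbitrary: ds)
  case Nil then show ?case by simp
next
  case (Cons c cs) then show ?case using assms by (cases ds) auto
qed

lemma lc_inj:
  assumes K: "subf K" and ind: "indepK K es"
    and cs: "length cs = length es" "set cs \<subseteq> K"
    and ds: "length ds = length es" "set ds \<subseteq> K"
    and eq: "lc cs es = lc ds es"
  shows "cs = ds"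
proof -
  have "lc (map2 (-) cs ds) es = 0" using lc_diff[OF cs(1) ds(1)] eq by simp
  moreover have "set (map2 (-) cs ds) \<subseteq> K"
    by (rule set_map2_sub[OF _ cs(2) ds(2)]) (use subf_diff[OF K] in auto)
  moreover have "length (map2 (-) cs ds) = length es" using cs ds by simp
  ultimately have z: "set (map2 (-) cs ds) \<subseteq> {0}" using ind unfolding indepK_def by blast
  show ?thesis
  proof (rule nth_equalityI)
    show "length cs = length ds" using cs ds by simp
    fix i assume i: "i < length cs"
    then have "map2 (-) cs ds ! i \<in> set (map2 (-) cs ds)" using cs ds by (intro nth_mem) simp
    with z i cs ds show "cs ! i = ds ! i" by auto
  qed
qed

lemma card_span:
  assumes K: "subf K" "finite K" and ind: "indepK K es"
  shows "card (spanK K es) = card K ^ length es"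
proof -
  have "spanK K es = (\<lambda>cs. lc cs es) ` {cs. set cs \<subseteq> K \<and> length cs = length es}"
    unfolding spanK_def by auto
  moreover have "inj_on (\<lambda>cs. lc cs es) {cs. set cs \<subseteq> K \<and> length cs = length es}"
    by (rule inj_onI) (use lc_inj[OF K(1) ind] in auto)
  ultimately show ?thesis by (simp add: card_image card_lists_length_eq[OF K(2)])
qed

lemma extend_indep:
  assumes K: "subf K" and ind: "indepK K es" and y: "y \<notin> spanK K es"
  shows "indepK K (y # es)"
  unfolding indepK_def
proof (intro allI impI)
  fix cs assume a: "length cs = length (y # es) \<and> set cs \<subseteq> K \<and> lc cs (y # es) = 0"
  then obtain c cs' where cs: "cs = c # cs'" by (cases cs) auto
  with a have c: "c \<in> K" and cs': "set cs' \<subseteq> K" "length cs' = length es" and e: "c * y + lc cs' es = 0" by auto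
  have "c = 0"
  proof (rule ccontr)
    assume c0: "c \<noteq> 0"
    have ic: "- inverse c \<in> K" using K c unfolding subf_def by auto
    have cy: "c * y = - lc cs' es" using e eq_neg_iff_add_eq_0 by blast
    have "y = inverse c * (c * y)" using c0 by simp
    also have "\<dots> = (- inverse c) * lc cs' es" unfolding cy by simp
    also have "\<dots> = lc (map ((*) (- inverse c)) cs') es" by (rule lc_scale[symmetric])
    finally have yeq: "y = lc (map ((*) (- inverse c)) cs') es" .
    have "\<forall>x\<in>set cs'. (- inverse c) * x \<in> K" using cs' ic K unfolding subf_def by blast
    then have "set (map ((*) (- inverse c)) cs') \<subseteq> K" unfolding set_map by blast
    moreover have "length (map ((*) (- inverse c)) cs') = length es" using cs' by simp
    ultimately have "y \<in> spanK K es" unfolding spanK_def mem_Collect_eq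
      by (intro exI[of _ "map ((*) (- inverse c)) cs'"]) (simp only: yeq simp_thms)
    with y show False by simp
  qed
  with e have "lc cs' es = 0" by simp
  with ind cs' have "set cs' \<subseteq> {0}" unfolding indepK_def by blast
  with \<open>c = 0\<close> cs show "set cs \<subseteq> {0}" by auto
qed

lemma indep_Nil: "indepK K []"
  unfolding indepK_def by auto

lemma basis_exists:
  assumes fin: "finite (UNIV :: 'a::field set)" and K: "subf (K :: 'a set)" and K2: "card K \<ge> 2"
  shows "\<exists>es. indepK K es \<and> spanK K es = UNIV"
proof -
  have finK: "finite K" using fin by (rule finite_subset[rotated]) simp
  let ?P = "\<lambda>k. \<exists>es. length es = k \<and> indepK K es"
  have bound: "\<forall>k. ?P k \<longrightarrow> k \<le> card (UNIV :: 'a set)"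
  proof (intro allI impI)
    fix k assume "?P k"
    then obtain es where es: "length es = k" "indepK K es" by blast
    have c1: "card (spanK K es) \<le> card (UNIV :: 'a set)"
      by (rule card_mono[OF fin]) simp
    have c2: "card K ^ k \<le> card (UNIV :: 'a set)"
      using c1 unfolding card_span[OF K finK es(2)] es(1) .
    have c3: "k < 2 ^ k" by (rule less_exp)
    have c4: "2 ^ k \<le> card K ^ k" by (rule power_mono[OF K2]) simp
    show "k \<le> card (UNIV :: 'a set)" using c2 c3 c4 by linarith
  qed
  have P0: "?P 0" using indep_Nil by auto
  have "\<exists>k. ?P k \<and> (\<forall>y. ?P y \<longrightarrow> y \<le> k)" by (rule Nat.ex_has_greatest_nat[OF P0 bound])
  then obtain k where kk: "?P k \<and> (\<forall>y. ?P y \<longrightarrow> y \<le> k)" ..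
  then have k: "?P k" "\<forall>y. ?P y \<longrightarrow> y \<le> k" by simp_all
  from k(1) obtain es where es: "length es = k" "indepK K es" by (elim exE conjE)
  have "spanK K es = UNIV"
  proof (rule ccontr)
    assume "spanK K es \<noteq> UNIV"
    then obtain y where "y \<notin> spanK K es" by blast
    from extend_indep[OF K es(2) this] have PS: "?P (Suc k)" using es by (intro exI[of _ "y # es"]) simp
    have "Suc k \<le> k" using k(2)[rule_format, OF PS] .
    then show False by simp
  qed
  with es show ?thesis by (intro exI[of _ es]) simp
qed


lemma pow_card_same:
  fixes x :: "'a :: {finite, field}"
  shows "x ^ card (UNIV :: 'a set) = x"
proof (cases "x = 0")
  case False
  have "x * (\<Prod>y\<in>UNIV-{0}. x * y) = x * x ^ (card (UNIV :: 'a set) - 1) * \<Prod>(UNIV-{0})"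
    by (simp add: prod.distrib mult_ac)
  also have "x * x ^ (card (UNIV :: 'a set) - 1) = x ^ Suc (card (UNIV :: 'a set) - 1)"
    by (subst power_Suc) auto
  also have "Suc (card (UNIV :: 'a set) - 1) = card (UNIV :: 'a set)"
    using finite_UNIV_card_ge_0[where ?'a = 'a] by simp
  also have "(\<Prod>y\<in>UNIV-{0}. x * y) = (\<Prod>y\<in>UNIV-{0}. y)"
    by (rule prod.reindex_bij_witness[of _ "\<lambda>y. y / x" "\<lambda>y. x * y"]) (use False in auto)
  finally show ?thesis
    by simp
qed (use finite_UNIV_card_ge_0[where ?'a = 'a] in auto)

lemma pow_card_pow_same:
  fixes x :: "'a :: {finite, field}"
  shows "x ^ (card (UNIV :: 'a set) ^ k) = x"
  by (induction k) (simp_all add: pow_card_same power_mult)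

lemma char_prime: "prime CHAR('a :: {finite, field})"
  by (rule prime_CHAR_semidom[OF finite_imp_CHAR_pos[OF finite_UNIV]])

lemma card_roots_le:
  fixes P :: "'a :: field poly"
  assumes "P \<noteq> 0" "degree P \<le> d"
  shows "card {x. poly P x = 0} \<le> d"
  using card_poly_roots_bound[OF assms(1)] assms(2) by linarith

lemma card_fix_pow_le:
  assumes m: "m \<ge> 2"
  shows "card {x :: 'a :: field. x ^ m = x} \<le> m"
proof -
  define P :: "'a poly" where "P = monom 1 m - monom 1 1"
  have "coeff P m = 1" unfolding P_def using m by simp
  then have P0: "P \<noteq> 0" by auto
  have "degree P \<le> m" unfolding P_def
    by (rule order.trans[OF degree_diff_le_max]) (use m in \<open>simp add: degree_monom_eq\<close>)
  moreover have "{x :: 'a. x ^ m = x} = {x. poly P x = 0}"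
    unfolding P_def by (simp add: poly_monom)
  ultimately show ?thesis using card_roots_le[OF P0] by simp
qed

lemma prime_subf: "subf (range (of_nat :: nat \<Rightarrow> 'a :: {finite, field}))"
proof -
  let ?P = "range (of_nat :: nat \<Rightarrow> 'a)"
  let ?c = "card (UNIV :: 'a set)"
  have neg: "- x \<in> ?P" if "x \<in> ?P" for x
  proof -
    from that obtain k where k: "x = of_nat k" by auto
    have "of_nat ((CHAR('a) - 1) * k) + of_nat k = (of_nat (CHAR('a) * k) :: 'a)"
    proof -
      have "(CHAR('a) - 1) * k + k = CHAR('a) * k"
        using char_prime[where 'a='a] prime_gt_0_nat[of "CHAR('a)"]
        by (simp add: algebra_simps)
      then show ?thesis by (metis of_nat_add)
    qed
    then have "of_nat ((CHAR('a) - 1) * k) = - x" unfolding k by (simp add: eq_neg_iff_add_eq_0)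
    then show ?thesis by (metis rangeI)
  qed
  have inv: "inverse x \<in> ?P" if "x \<in> ?P" for x
  proof (cases "x = 0")
    case True then show ?thesis by (metis inverse_zero of_nat_0 rangeI)
  next
    case False
    from that obtain k where k: "x = of_nat k" by auto
    have c2: "?c \<ge> 2"
    proof -
      have "{0, 1::'a} \<subseteq> UNIV" by simp
      then have "card {0, 1::'a} \<le> ?c" by (rule card_mono[OF finite_UNIV])
      then show ?thesis by simp
    qed
    have "x * x ^ (?c - 2) = x ^ (?c - 1)"
      using c2 by (metis Suc_diff_Suc Suc_1 diff_Suc_1 less_le_trans lessI power_Suc)
    moreover have "x * x ^ (?c - 1) = x * 1"
      using pow_card_same[of x] c2 by (metis Suc_diff_1 less_le_trans pos2 power_Suc mult_1_right)
    ultimately have "x * x ^ (?c - 2) = 1" using False by simp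
    then have "inverse x = x ^ (?c - 2)" using False by (metis inverse_unique)
    also have "\<dots> = of_nat (k ^ (?c - 2))" unfolding k by (rule of_nat_power[symmetric])
    finally show ?thesis by (rule ssubst) (rule rangeI)
  qed
  show ?thesis unfolding subf_def
    by (auto intro: neg inv) (metis of_nat_0 rangeI, metis of_nat_1 rangeI,
        metis of_nat_add rangeI, metis of_nat_mult rangeI)
qed


lemma card_prime_subf: "card (range (of_nat :: nat \<Rightarrow> 'a :: {finite, field})) = CHAR('a)"
proof -
  let ?p = "CHAR('a)"
  have p0: "?p > 0" using char_prime[where 'a='a] prime_gt_0_nat by blast
  have "range (of_nat :: nat \<Rightarrow> 'a) = of_nat ` {..<?p}"
  proof (intro equalityI subsetI)
    fix x assume "x \<in> range (of_nat :: nat \<Rightarrow> 'a)"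
    then obtain k where k: "x = of_nat k" by auto
    have "(of_nat k :: 'a) = of_nat (k mod ?p + ?p * (k div ?p))" by simp
    also have "\<dots> = of_nat (k mod ?p)" by (simp only: of_nat_add of_nat_mult of_nat_CHAR) simp
    finally show "x \<in> of_nat ` {..<?p}" unfolding k using p0 by auto
  qed auto
  moreover have "inj_on (of_nat :: nat \<Rightarrow> 'a) {..<?p}"
  proof (rule linorder_inj_onI)
    fix a b assume ab: "a < b" "b \<in> {..<?p}"
    show "(of_nat a :: 'a) \<noteq> of_nat b"
    proof
      assume "(of_nat a :: 'a) = of_nat b"
      then have "?p dvd (b - a)" using of_nat_eq_iff_char_dvd[OF ab(1), where ?'a='a] by simp
      then have "?p \<le> b - a" using ab(1) by (simp add: dvd_imp_le)
      with ab show False by auto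
    qed
  qed auto
  ultimately show ?thesis by (simp add: card_image)
qed

lemma card_char_pow: "\<exists>m. card (UNIV :: 'a :: {finite, field} set) = CHAR('a) ^ m"
proof -
  let ?P = "range (of_nat :: nat \<Rightarrow> 'a)"
  have "CHAR('a) \<ge> 2" using char_prime[where 'a='a] prime_ge_2_nat by blast
  then have c2: "card ?P \<ge> 2" by (simp add: card_prime_subf)
  obtain es where es: "indepK ?P es" "spanK ?P es = UNIV"
    using basis_exists[OF finite_UNIV prime_subf c2] by blast
  have "card (UNIV :: 'a set) = card ?P ^ length es"
    using card_span[OF prime_subf finite_subset[OF subset_UNIV finite_UNIV] es(1)] es(2) by simp
  then show ?thesis by (intro exI[of _ "length es"]) (simp add: card_prime_subf)
qed

locale ffs =
  fixes q n :: nat and ty :: "'a :: {finite, field} itself"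
  assumes n2: "n \<ge> 2" and q2: "q \<ge> 2" and cardF: "card (UNIV :: 'a set) = q ^ n"
begin

lemma q_char_pow: "\<exists>j. q = CHAR('a) ^ j"
proof -
  obtain m where m: "card (UNIV :: 'a set) = CHAR('a) ^ m" using card_char_pow by blast
  have "q dvd q ^ n" using n2 by (simp add: dvd_power)
  then have "q dvd CHAR('a) ^ m" using m cardF by simp
  then show ?thesis using divides_primepow_nat[OF char_prime[where 'a='a]] by blast
qed

lemma frob_pow_char: "\<exists>j. q ^ i = CHAR('a) ^ j"
proof -
  obtain j where "q = CHAR('a) ^ j" using q_char_pow by blast
  then show ?thesis by (intro exI[of _ "j * i"]) (simp add: power_mult)
qed

lemma frob_add: "(x + y :: 'a) ^ (q ^ i) = x ^ (q ^ i) + y ^ (q ^ i)"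
proof -
  obtain j where "q ^ i = CHAR('a) ^ j" using frob_pow_char by blast
  then show ?thesis by (simp add: freshmans_dream'[OF char_prime])
qed

lemma frob_add1: "(x + y :: 'a) ^ q = x ^ q + y ^ q"
  using frob_add[of x y 1] by simp

lemma frob_sum: "(\<Sum>k\<in>A. f k :: 'a) ^ (q ^ i) = (\<Sum>k\<in>A. f k ^ (q ^ i))"
proof -
  obtain j where "q ^ i = CHAR('a) ^ j" using frob_pow_char by blast
  then show ?thesis by (simp add: freshmans_dream_sum'[OF char_prime])
qed

lemma frob_neg: "(- x :: 'a) ^ (q ^ i) = - (x ^ (q ^ i))"
proof -
  have "(- x + x) ^ (q ^ i) = (- x) ^ (q ^ i) + x ^ (q ^ i)" by (rule frob_add)
  moreover have "(0::'a) ^ (q ^ i) = 0" using q2 by simp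
  ultimately show ?thesis by (simp add: eq_neg_iff_add_eq_0)
qed

lemma frob_diff: "(x - y :: 'a) ^ (q ^ i) = x ^ (q ^ i) - y ^ (q ^ i)"
  using frob_add[of x "- y" i] frob_neg[of y i] by simp

lemma pow_qn: "(x :: 'a) ^ (q ^ n) = x"
  using pow_card_same[of x] cardF by simp

lemma Kf_pow: "c \<in> Kf q \<Longrightarrow> (c :: 'a) ^ (q ^ i) = c"
proof (induction i)
  case (Suc i)
  have "c ^ (q ^ Suc i) = (c ^ (q ^ i)) ^ q" by (simp add: power_mult[symmetric] mult.commute)
  then show ?case using Suc by (simp add: Kf_def)
qed simp

lemma subf_K: "subf (Kf q :: 'a set)"
  unfolding subf_def Kf_def
  using frob_add1 frob_neg[of _ 1] q2
  by (auto simp: power_mult_distrib power_inverse)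

end


context ffs
begin

abbreviation KK :: "'a set" where "KK \<equiv> Kf q"

abbreviation trr :: "'a \<Rightarrow> 'a" where "trr \<equiv> tr q n"

lemma q_pos: "q > 0" using q2 by simp

lemma tr_add: "trr (x + y) = trr x + trr y"
  unfolding tr_def by (simp add: frob_add sum.distrib)

lemma tr_neg: "trr (- x) = - trr x"
  unfolding tr_def by (simp add: frob_neg sum_negf)

lemma tr_diff: "trr (x - y) = trr x - trr y"
  using tr_add[of x "- y"] tr_neg[of y] by simp

lemma tr_zero: "trr 0 = 0"
  using tr_diff[of 0 0] by simp

lemma tr_Kmult: "c \<in> KK \<Longrightarrow> trr (c * x) = c * trr x"
  unfolding tr_def by (simp add: power_mult_distrib Kf_pow sum_distrib_left)

lemma tr_pow_q: "trr x ^ q = trr x"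
proof -
  have "trr x ^ q = (\<Sum>i<n. (x ^ (q ^ i)) ^ (q ^ 1))"
    unfolding tr_def using frob_sum[of "\<lambda>i. x ^ (q ^ i)" "{..<n}" 1] by simp
  also have "\<dots> = (\<Sum>i<n. x ^ (q ^ Suc i))"
    by (simp add: power_mult[symmetric] mult.commute)
  also have "\<dots> = trr x"
  proof -
    have "(\<Sum>i<Suc n. x ^ (q ^ i)) = x ^ (q ^ 0) + (\<Sum>i<n. x ^ (q ^ Suc i))"
      by (rule sum.lessThan_Suc_shift)
    moreover have "(\<Sum>i<Suc n. x ^ (q ^ i)) = (\<Sum>i<n. x ^ (q ^ i)) + x ^ (q ^ n)"
      by simp
    ultimately show ?thesis unfolding tr_def using pow_qn[of x] by simp
  qed
  finally show ?thesis .
qed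

lemma tr_in_K: "trr x \<in> KK"
  using tr_pow_q unfolding Kf_def by simp

lemma tr_frob: "trr (x ^ q) = trr x"
proof -
  have "trr (x ^ q) = (\<Sum>i<n. (x ^ (q ^ i)) ^ (q ^ 1))"
    unfolding tr_def by (simp add: power_mult[symmetric] mult.commute)
  also have "\<dots> = trr x ^ q"
    unfolding tr_def using frob_sum[of "\<lambda>i. x ^ (q ^ i)" "{..<n}" 1] by simp
  finally show ?thesis using tr_pow_q by simp
qed

definition TP :: "'a poly" where "TP = (\<Sum>i<n. monom 1 (q ^ i))"

lemma poly_TP: "poly TP x = trr x"
  unfolding TP_def tr_def by (simp add: poly_sum poly_monom)

lemma TP_nonzero: "TP \<noteq> 0"
proof -
  have "coeff TP (q ^ (n - 1)) = (\<Sum>i<n. if q ^ i = q ^ (n - 1) then 1 else 0)"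
    unfolding TP_def by (simp add: coeff_sum)
  also have "\<dots> = (\<Sum>i\<in>{n - 1}. 1)"
  proof -
    have "\<And>i. (q ^ i = q ^ (n - 1)) = (i = n - 1)" using q2 by simp
    then have "(\<Sum>i<n. if q ^ i = q ^ (n - 1) then 1 else 0) = (\<Sum>i<n. if i = n - 1 then (1::'a) else 0)"
      by simp
    also have "\<dots> = (\<Sum>i\<in>{n - 1}. 1)" using n2 by (subst sum.delta) auto
    finally show ?thesis .
  qed
  finally have "coeff TP (q ^ (n - 1)) = 1" by simp
  then show ?thesis by auto
qed

lemma TP_degree: "degree TP \<le> q ^ (n - 1)"
  unfolding TP_def
proof (rule degree_sum_le)
  fix i assume "i \<in> {..<n}"
  then have "q ^ i \<le> q ^ (n - 1)" using q2 by (intro power_increasing) auto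
  then show "degree (monom (1::'a) (q ^ i)) \<le> q ^ (n - 1)" using degree_monom_le order.trans by blast
qed simp

lemma card_tr_zero: "card {x. trr x = 0} \<le> q ^ (n - 1)"
  using card_roots_le[OF TP_nonzero TP_degree] by (simp add: poly_TP)

lemma qn_gt: "q ^ (n - 1) < q ^ n"
  using q2 n2 by (intro power_strict_increasing) auto

lemma tr_nonzero: "\<exists>x. trr x \<noteq> 0"
proof (rule ccontr)
  assume "\<not> ?thesis"
  then have "{x. trr x = 0} = UNIV" by auto
  then have "card (UNIV :: 'a set) \<le> q ^ (n - 1)" using card_tr_zero by simp
  then show False using cardF qn_gt by simp
qed

lemma tr_nondeg: "(\<And>x. trr (m * x) = 0) \<Longrightarrow> m = 0"
proof (rule ccontr)
  assume h: "\<And>x. trr (m * x) = 0" and m: "m \<noteq> 0"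
  obtain x where x: "trr x \<noteq> 0" using tr_nonzero by blast
  have "trr (m * (inverse m * x)) = 0" by (rule h)
  then show False using m x by (simp add: mult.assoc[symmetric])
qed

lemma card_K_le: "card KK \<le> q"
  unfolding Kf_def by (rule card_fix_pow_le[OF q2])

lemma card_K_ge: "card KK \<ge> q"
proof -
  define h :: "'a \<Rightarrow> 'a" where "h x = x ^ q - x" for x
  have hdiff: "h (x - y) = h x - h y" for x y
    unfolding h_def using frob_diff[of x y 1] by simp
  have hK: "h x = 0 \<longleftrightarrow> x \<in> KK" for x unfolding h_def Kf_def by simp
  have rng: "range h \<subseteq> {x. trr x = 0}"
    unfolding h_def by (auto simp: tr_diff tr_frob)
  define s where "s z = (SOME x. h x = z)" for z
  have hs: "h (s z) = z" if "z \<in> range h" for z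
    unfolding s_def using that by (auto intro: someI)
  have "UNIV \<subseteq> (\<lambda>(z, k). s z + k) ` (range h \<times> KK)"
  proof
    fix x :: 'a
    have "h (x - s (h x)) = 0" using hdiff hs by simp
    then have "x - s (h x) \<in> KK" using hK by blast
    then have "(h x, x - s (h x)) \<in> range h \<times> KK" by simp
    moreover have "x = (\<lambda>(z, k). s z + k) (h x, x - s (h x))" by simp
    ultimately show "x \<in> (\<lambda>(z, k). s z + k) ` (range h \<times> KK)" by (rule rev_image_eqI)
  qed
  then have "card (UNIV :: 'a set) \<le> card ((\<lambda>(z, k). s z + k) ` (range h \<times> KK))"
    by (intro card_mono) auto
  also have "\<dots> \<le> card (range h \<times> KK)" by (rule card_image_le) simp
  also have "\<dots> = card (range h) * card KK" by (simp add: card_cartesian_product)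
  also have "\<dots> \<le> q ^ (n - 1) * card KK"
    using card_mono[OF _ rng] card_tr_zero by (intro mult_right_mono) auto
  finally have "q ^ n \<le> q ^ (n - 1) * card KK" using cardF by simp
  moreover have "q ^ n = q ^ (n - 1) * q" using n2 by (metis Suc_diff_1 less_le_trans pos2 power_Suc2)
  ultimately have "q ^ (n - 1) * q \<le> q ^ (n - 1) * card KK" by simp
  then show ?thesis using q2 by simp
qed

lemma card_K: "card KK = q"
  using card_K_le card_K_ge by simp

lemma basis: "\<exists>es. length es = n \<and> indepK KK es \<and> spanK KK es = UNIV"
proof -
  obtain es where es: "indepK KK es" "spanK KK es = UNIV"
    using basis_exists[OF finite_UNIV subf_K] card_K q2 by auto
  have "card (UNIV :: 'a set) = q ^ length es"
    using card_span[OF subf_K finite_subset[OF subset_UNIV finite_UNIV] es(1)] es(2) card_K by simp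
  then have "length es = n" using cardF q2 by simp
  with es show ?thesis by blast
qed

end


lemma lc_sum: "length cs = length es \<Longrightarrow> lc cs es = (\<Sum>j<length es. cs ! j * es ! j)"
proof (induction es arbitrary: cs)
  case Nil then show ?case by simp
next
  case (Cons e es)
  obtain c cs' where c: "cs = c # cs'" using Cons.prems by (cases cs) auto
  have "lc cs' es = (\<Sum>j<length es. cs' ! j * es ! j)" using Cons c by simp
  then show ?case unfolding c by (simp add: sum.lessThan_Suc_shift del: sum.lessThan_Suc)
qed

context ffs
begin

definition Fun :: "('a \<Rightarrow> 'a) set" where
  "Fun = {\<psi>. (\<forall>x y. \<psi> (x + y) = \<psi> x + \<psi> y) \<and> (\<forall>c\<in>KK. \<forall>x. \<psi> (c * x) = c * \<psi> x) \<and> (\<forall>x. \<psi> x \<in> KK)}"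

lemma lc_map:
  assumes add: "\<And>x y. \<psi> (x + y) = \<psi> x + \<psi> y" and hom: "\<And>c x. c \<in> KK \<Longrightarrow> \<psi> (c * x) = c * \<psi> x"
  shows "set cs \<subseteq> KK \<Longrightarrow> length cs = length es \<Longrightarrow> \<psi> (lc cs es) = lc cs (map \<psi> es)"
proof (induction es arbitrary: cs)
  case Nil
  have "\<psi> 0 + \<psi> 0 = \<psi> 0 + 0" using add[of 0 0] by simp
  then have "\<psi> 0 = 0" by (rule add_left_imp_eq)
  then show ?case by simp
next
  case (Cons e es)
  obtain c cs' where c: "cs = c # cs'" using Cons.prems by (cases cs) auto
  then show ?case using Cons by (simp add: add hom)
qed

definition bas :: "'a list" where
  "bas = (SOME es. length es = n \<and> indepK KK es \<and> spanK KK es = UNIV)"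

lemma bas: "length bas = n" "indepK KK bas" "spanK KK bas = UNIV"
  using someI_ex[OF basis] unfolding bas_def by auto

lemma bas_repr: "\<exists>cs. length cs = n \<and> set cs \<subseteq> KK \<and> lc cs bas = y"
proof -
  have "y \<in> spanK KK bas" using bas(3) by simp
  then show ?thesis unfolding spanK_def using bas(1) by auto
qed

lemma tr_uniq: "(\<And>x. trr (a * x) = trr (b * x)) \<Longrightarrow> a = b"
proof -
  assume h: "\<And>x. trr (a * x) = trr (b * x)"
  have "\<And>x. trr ((a - b) * x) = 0" using h by (simp add: algebra_simps tr_diff)
  then have "a - b = 0" by (rule tr_nondeg)
  then show ?thesis by simp
qed

lemma trfun_in_Fun: "(\<lambda>x. trr (m * x)) \<in> Fun"
  unfolding Fun_def by (auto simp: distrib_left tr_add tr_in_K mult.left_commute tr_Kmult)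

lemma finite_Fun: "finite Fun"
  by (rule finite_subset[OF subset_UNIV finite_UNIV])

lemma fun_repr: "\<psi> \<in> Fun \<Longrightarrow> \<exists>m. \<psi> = (\<lambda>x. trr (m * x))"
proof -
  assume psi: "\<psi> \<in> Fun"
  let ?L = "{xs. set xs \<subseteq> KK \<and> length xs = n}"
  have inj: "inj_on (\<lambda>\<psi>. map \<psi> bas) Fun"
  proof (rule inj_onI)
    fix \<psi>1 \<psi>2 assume a: "\<psi>1 \<in> Fun" "\<psi>2 \<in> Fun" "map \<psi>1 bas = map \<psi>2 bas"
    show "\<psi>1 = \<psi>2"
    proof
      fix y
      obtain cs where cs: "length cs = n" "set cs \<subseteq> KK" "lc cs bas = y" using bas_repr by blast
      have "\<psi>1 y = lc cs (map \<psi>1 bas)"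
        using lc_map[of \<psi>1 cs bas] a(1) cs bas(1) unfolding Fun_def by auto
      also have "\<dots> = lc cs (map \<psi>2 bas)" by (simp only: a(3))
      also have "\<dots> = \<psi>2 y"
        using lc_map[of \<psi>2 cs bas] a(2) cs bas(1) unfolding Fun_def by auto
      finally show "\<psi>1 y = \<psi>2 y" .
    qed
  qed
  have sub: "(\<lambda>\<psi>. map \<psi> bas) ` Fun \<subseteq> ?L" using bas(1) unfolding Fun_def by auto
  have "card Fun \<le> card ?L"
    using card_mono[OF finite_lists_length_eq[OF finite_subset[OF subset_UNIV finite_UNIV]] sub]
      card_image[OF inj] by simp
  also have "\<dots> = q ^ n" using card_lists_length_eq[of KK n] card_K by simp
  finally have cF: "card Fun \<le> q ^ n" .
  let ?T = "\<lambda>m. (\<lambda>x. trr (m * x))"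
  have injT: "inj ?T"
  proof (rule injI)
    fix a b assume "?T a = ?T b"
    then have "\<And>x. trr (a * x) = trr (b * x)" by metis
    then show "a = b" by (rule tr_uniq)
  qed
  have rT: "range ?T \<subseteq> Fun" using trfun_in_Fun by auto
  have "card (range ?T) = q ^ n" using card_image[OF injT] cardF by simp
  then have "range ?T = Fun" using card_subset_eq[OF finite_Fun rT] cF card_mono[OF finite_Fun rT]
    by simp
  then show ?thesis using psi by auto
qed

definition coords :: "'a \<Rightarrow> 'a list" where
  "coords y = (SOME cs. length cs = n \<and> set cs \<subseteq> KK \<and> lc cs bas = y)"

lemma coords: "length (coords y) = n" "set (coords y) \<subseteq> KK" "lc (coords y) bas = y"
  using someI_ex[OF bas_repr[of y]] unfolding coords_def by auto

lemma coords_unique: "length cs = n \<Longrightarrow> set cs \<subseteq> KK \<Longrightarrow> lc cs bas = y \<Longrightarrow> coords y = cs"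
  using lc_inj[OF subf_K bas(2), of "coords y" cs] coords bas(1) by simp

lemma coords_add: "coords (x + y) = map2 (+) (coords x) (coords y)"
proof (rule coords_unique)
  show "length (map2 (+) (coords x) (coords y)) = n" using coords by simp
  show "set (map2 (+) (coords x) (coords y)) \<subseteq> KK"
    by (rule set_map2_sub[OF _ coords(2) coords(2)]) (use subf_K in \<open>auto simp: subf_def\<close>)
  show "lc (map2 (+) (coords x) (coords y)) bas = x + y"
    using lc_add[of "coords x" bas "coords y"] coords bas(1) by simp
qed

lemma coords_scale: "c \<in> KK \<Longrightarrow> coords (c * y) = map ((*) c) (coords y)"
proof (rule coords_unique)
  assume c: "c \<in> KK"
  show "length (map ((*) c) (coords y)) = n" using coords by simp
  show "set (map ((*) c) (coords y)) \<subseteq> KK" using coords(2) c subf_K by (auto simp: subf_def)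
  show "lc (map ((*) c) (coords y)) bas = c * y" using lc_scale[of c "coords y" bas] coords(3)[of y] by simp
qed

definition crd :: "nat \<Rightarrow> 'a \<Rightarrow> 'a" where "crd j y = coords y ! j"

lemma crd_Fun: "j < n \<Longrightarrow> crd j \<in> Fun"
  unfolding Fun_def crd_def mem_Collect_eq
proof (intro conjI allI ballI)
  assume j: "j < n"
  fix x y show "coords (x + y) ! j = coords x ! j + coords y ! j"
    using j coords(1) by (simp add: coords_add)
next
  assume j: "j < n"
  fix c x assume "c \<in> KK" then show "coords (c * x) ! j = c * coords x ! j"
    using j coords(1) by (simp add: coords_scale)
next
  assume j: "j < n"
  fix x show "coords x ! j \<in> KK"
    using j coords(1)[of x] by (intro subsetD[OF coords(2)[of x]] nth_mem) simp
qed

lemma crd_sum: "y = (\<Sum>j<n. crd j y * bas ! j)"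
  using lc_sum[of "coords y" bas] coords bas(1) unfolding crd_def by simp

end


lemma one_Kf: "1 \<in> Kf q" unfolding Kf_def by simp

lemma Kf_mult: "c \<in> Kf q \<Longrightarrow> d \<in> Kf q \<Longrightarrow> c * d \<in> Kf q"
  unfolding Kf_def by (simp add: power_mult_distrib)

lemma kscal_Emaps: "\<phi> \<in> Emaps q \<Longrightarrow> c \<in> Kf q \<Longrightarrow> kscal c \<phi> \<in> Emaps q"
  unfolding Emaps_def kscal_def by (auto simp: distrib_left mult.left_commute)

lemma fadd_Emaps: "\<phi> \<in> Emaps q \<Longrightarrow> \<psi> \<in> Emaps q \<Longrightarrow> fadd \<phi> \<psi> \<in> Emaps q"
  unfolding Emaps_def fadd_def by (auto simp: distrib_left algebra_simps)

lemma fzero_Emaps: "fzero \<in> Emaps q"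
  unfolding Emaps_def fzero_def by auto

lemma kscal_one: "kscal 1 \<phi> = \<phi>" unfolding kscal_def by simp

lemma kscal_kscal: "kscal c (kscal d \<phi>) = kscal (c * d) \<phi>" unfolding kscal_def by (simp add: mult.assoc)

lemma pt_self: "\<phi> \<in> pt q \<phi>"
  unfolding pt_def using one_Kf kscal_one by (metis (mono_tags, lifting) mem_Collect_eq one_neq_zero)

lemma pt_eq: "pt q \<phi> = pt q \<psi> \<Longrightarrow> \<exists>c. c \<in> Kf q \<and> c \<noteq> 0 \<and> \<psi> = kscal c \<phi>"
proof -
  assume "pt q \<phi> = pt q \<psi>"
  then have "\<psi> \<in> pt q \<phi>" using pt_self[of \<psi> q] by simp
  then show ?thesis unfolding pt_def by auto
qed

lemma pt_kscal: "c \<in> Kf q \<Longrightarrow> c \<noteq> 0 \<Longrightarrow> pt q (kscal c \<phi>) = pt q \<phi>"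
proof -
  assume c: "c \<in> Kf q" "c \<noteq> 0"
  have ic: "inverse c \<in> Kf q" using c unfolding Kf_def by (simp add: power_inverse)
  show ?thesis unfolding pt_def
  proof (intro equalityI subsetI)
    fix x assume "x \<in> {kscal d (kscal c \<phi>) |d. d \<in> Kf q \<and> d \<noteq> 0}"
    then obtain d where "x = kscal (d * c) \<phi>" "d \<in> Kf q" "d \<noteq> 0" by (auto simp: kscal_kscal)
    then show "x \<in> {kscal d \<phi> |d. d \<in> Kf q \<and> d \<noteq> 0}" using c Kf_mult by fastforce
  next
    fix x assume "x \<in> {kscal d \<phi> |d. d \<in> Kf q \<and> d \<noteq> 0}"
    then obtain d where d: "x = kscal d \<phi>" "d \<in> Kf q" "d \<noteq> 0" by auto
    then have "x = kscal (d * inverse c) (kscal c \<phi>)" using c by (simp add: kscal_kscal mult.assoc)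
    then show "x \<in> {kscal d (kscal c \<phi>) |d. d \<in> Kf q \<and> d \<noteq> 0}" using d ic c Kf_mult by fastforce
  qed
qed

lemma klin_img_pt:
  assumes "klin_bij q f" "\<phi> \<in> Emaps q"
  shows "f ` pt q \<phi> = pt q (f \<phi>)"
proof -
  have "f (kscal c \<phi>) = kscal c (f \<phi>)" if "c \<in> Kf q" for c
    using assms that unfolding klin_bij_def by blast
  then show ?thesis unfolding pt_def by (auto simp: image_def)
qed

lemma pt_subset: "\<phi> \<in> Emaps q \<Longrightarrow> pt q \<phi> \<subseteq> Emaps q"
  unfolding pt_def using kscal_Emaps by blast

section \<open>F_{q^n}-structures\<close>

lemma fstructD:
  assumes "fstruct q sm"
  shows "\<And>a \<phi>. \<phi> \<in> Emaps q \<Longrightarrow> sm a \<phi> \<in> Emaps q"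
    and "\<And>a \<phi> \<psi>. \<phi> \<in> Emaps q \<Longrightarrow> \<psi> \<in> Emaps q \<Longrightarrow> sm a (fadd \<phi> \<psi>) = fadd (sm a \<phi>) (sm a \<psi>)"
    and "\<And>a b \<phi>. \<phi> \<in> Emaps q \<Longrightarrow> sm (a + b) \<phi> = fadd (sm a \<phi>) (sm b \<phi>)"
    and "\<And>a b \<phi>. \<phi> \<in> Emaps q \<Longrightarrow> sm (a * b) \<phi> = sm a (sm b \<phi>)"
    and "\<And>\<phi>. \<phi> \<in> Emaps q \<Longrightarrow> sm 1 \<phi> = \<phi>"
    and "\<And>c \<phi>. c \<in> Kf q \<Longrightarrow> \<phi> \<in> Emaps q \<Longrightarrow> sm c \<phi> = kscal c \<phi>"
  using assms unfolding fstruct_def by blast+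

lemma Fpt_subset: "fstruct q sm \<Longrightarrow> \<phi> \<in> Emaps q \<Longrightarrow> p \<in> Fpt q sm \<phi> \<Longrightarrow> p \<subseteq> Emaps q"
  unfolding Fpt_def using pt_subset fstructD(1) by blast

lemma Fpt_scale:
  assumes sm: "fstruct q sm" and phi: "\<phi> \<in> Emaps q" and l: "l \<noteq> 0"
  shows "Fpt q sm (sm l \<phi>) = Fpt q sm \<phi>"
  unfolding Fpt_def
proof (intro equalityI subsetI)
  fix x assume "x \<in> {pt q (sm m (sm l \<phi>)) |m. m \<noteq> 0}"
  then obtain m where "x = pt q (sm (m * l) \<phi>)" "m \<noteq> 0" using fstructD(4)[OF sm phi] by auto
  then show "x \<in> {pt q (sm m \<phi>) |m. m \<noteq> 0}" using l by auto
next
  fix x assume "x \<in> {pt q (sm m \<phi>) |m. m \<noteq> 0}"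
  then obtain m where m: "x = pt q (sm m \<phi>)" "m \<noteq> 0" by auto
  then have "x = pt q (sm (m * inverse l) (sm l \<phi>))"
    using fstructD(4)[OF sm phi, of "m * inverse l" l] l by (simp add: mult.assoc)
  then show "x \<in> {pt q (sm m (sm l \<phi>)) |m. m \<noteq> 0}" using l m by auto
qed

lemma Fpt_self: "fstruct q sm \<Longrightarrow> \<phi> \<in> Emaps q \<Longrightarrow> pt q \<phi> \<in> Fpt q sm \<phi>"
  unfolding Fpt_def using fstructD(5) by (metis (mono_tags, lifting) mem_Collect_eq one_neq_zero)

lemma Fpt_eq:
  assumes sm: "fstruct q sm" and phi: "\<phi> \<in> Emaps q" and psi: "\<psi> \<in> Emaps q"
    and eq: "Fpt q sm \<psi> = Fpt q sm \<phi>"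
  shows "\<exists>l. l \<noteq> 0 \<and> \<psi> = sm l \<phi>"
proof -
  have "pt q \<psi> \<in> Fpt q sm \<phi>" using Fpt_self[OF sm psi] eq by simp
  then obtain l where l: "l \<noteq> 0" "pt q \<psi> = pt q (sm l \<phi>)" unfolding Fpt_def by auto
  then obtain c where c: "c \<in> Kf q" "c \<noteq> 0" "\<psi> = kscal c (sm l \<phi>)" using pt_eq by metis
  then have "\<psi> = sm (c * l) \<phi>"
    using fstructD(6)[OF sm c(1) fstructD(1)[OF sm phi]] fstructD(4)[OF sm phi] by simp
  moreover have "c * l \<noteq> 0" using c l by simp
  ultimately show ?thesis by blast
qed


section \<open>Linear bijections\<close>

lemma klinD:
  assumes "klin_bij q g"
  shows "bij_betw g (Emaps q) (Emaps q)"
    and "\<And>\<phi> \<psi>. \<phi> \<in> Emaps q \<Longrightarrow> \<psi> \<in> Emaps q \<Longrightarrow> g (fadd \<phi> \<psi>) = fadd (g \<phi>) (g \<psi>)"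
    and "\<And>c \<phi>. c \<in> Kf q \<Longrightarrow> \<phi> \<in> Emaps q \<Longrightarrow> g (kscal c \<phi>) = kscal c (g \<phi>)"
    and "\<And>\<phi>. \<phi> \<in> Emaps q \<Longrightarrow> g \<phi> \<in> Emaps q"
  using assms unfolding klin_bij_def bij_betw_def by blast+

lemma klin_inj: "klin_bij q g \<Longrightarrow> \<phi> \<in> Emaps q \<Longrightarrow> \<psi> \<in> Emaps q \<Longrightarrow> g \<phi> = g \<psi> \<Longrightarrow> \<phi> = \<psi>"
  using klinD(1) unfolding bij_betw_def inj_on_def by blast

lemma fadd_fzero: "fadd fzero fzero = fzero" unfolding fadd_def fzero_def by simp

lemma klin_fzero:
  fixes g :: "('a::{finite,field} \<Rightarrow> 'a) \<Rightarrow> ('a \<Rightarrow> 'a)"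
  assumes g: "klin_bij q g"
  shows "g fzero = fzero"
proof -
  have "g fzero = g (fadd fzero fzero)" by (simp only: fadd_fzero)
  also have "\<dots> = fadd (g fzero) (g fzero)" by (rule klinD(2)[OF g fzero_Emaps fzero_Emaps])
  finally have "g fzero = fadd (g fzero) (g fzero)" .
  have "g fzero x = 0" for x
  proof -
    have e: "g fzero x = g fzero x + g fzero x" using fun_cong[OF \<open>g fzero = fadd (g fzero) (g fzero)\<close>, of x]
      unfolding fadd_def by simp
    have "g fzero x + g fzero x = g fzero x + 0" using e[symmetric] by (simp only: add_0_right)
    then show ?thesis by (rule add_left_imp_eq)
  qed
  then show ?thesis unfolding fzero_def by auto
qed

lemma klin_fzero_iff:
  fixes g :: "('a::{finite,field} \<Rightarrow> 'a) \<Rightarrow> ('a \<Rightarrow> 'a)"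
  assumes g: "klin_bij q g" and phi: "\<phi> \<in> Emaps q"
  shows "g \<phi> = fzero \<longleftrightarrow> \<phi> = fzero"
  using klin_fzero[OF g] klin_inj[OF g phi fzero_Emaps] by auto

definition ginv :: "nat \<Rightarrow> (('a::{finite,field} \<Rightarrow> 'a) \<Rightarrow> ('a \<Rightarrow> 'a)) \<Rightarrow> ('a \<Rightarrow> 'a) \<Rightarrow> ('a \<Rightarrow> 'a)" where
  "ginv q g = inv_into (Emaps q) g"

lemma ginv_props:
  fixes g :: "('a::{finite,field} \<Rightarrow> 'a) \<Rightarrow> ('a \<Rightarrow> 'a)"
  assumes g: "klin_bij q g"
  shows "\<And>\<phi>. \<phi> \<in> Emaps q \<Longrightarrow> ginv q g \<phi> \<in> Emaps q"
    and "\<And>\<phi>. \<phi> \<in> Emaps q \<Longrightarrow> g (ginv q g \<phi>) = \<phi>"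
    and "\<And>\<phi>. \<phi> \<in> Emaps q \<Longrightarrow> ginv q g (g \<phi>) = \<phi>"
proof -
  have b: "bij_betw g (Emaps q) (Emaps q)" by (rule klinD(1)[OF g])
  show "\<And>\<phi>. \<phi> \<in> Emaps q \<Longrightarrow> ginv q g \<phi> \<in> Emaps q"
    unfolding ginv_def using bij_betw_inv_into[OF b] bij_betwE by blast
  show "\<And>\<phi>. \<phi> \<in> Emaps q \<Longrightarrow> g (ginv q g \<phi>) = \<phi>"
    unfolding ginv_def using b by (simp add: bij_betw_inv_into_right)
  show "\<And>\<phi>. \<phi> \<in> Emaps q \<Longrightarrow> ginv q g (g \<phi>) = \<phi>"
    unfolding ginv_def using b by (simp add: bij_betw_inv_into_left)
qed

lemma klin_ginv:
  fixes g :: "('a::{finite,field} \<Rightarrow> 'a) \<Rightarrow> ('a \<Rightarrow> 'a)"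
  assumes g: "klin_bij q g"
  shows "klin_bij q (ginv q g)"
  unfolding klin_bij_def
proof (intro conjI ballI)
  show "bij_betw (ginv q g) (Emaps q) (Emaps q)"
    unfolding ginv_def by (rule bij_betw_inv_into[OF klinD(1)[OF g]])
next
  fix \<phi> \<psi> :: "'a \<Rightarrow> 'a" assume a: "\<phi> \<in> Emaps q" "\<psi> \<in> Emaps q"
  have "g (fadd (ginv q g \<phi>) (ginv q g \<psi>)) = fadd \<phi> \<psi>"
    using klinD(2)[OF g ginv_props(1)[OF g a(1)] ginv_props(1)[OF g a(2)]] ginv_props(2)[OF g] a by simp
  then show "ginv q g (fadd \<phi> \<psi>) = fadd (ginv q g \<phi>) (ginv q g \<psi>)"
    using ginv_props(3)[OF g fadd_Emaps[OF ginv_props(1)[OF g a(1)] ginv_props(1)[OF g a(2)]]] by simp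
next
  fix c :: 'a and \<phi> :: "'a \<Rightarrow> 'a" assume a: "c \<in> Kf q" "\<phi> \<in> Emaps q"
  have "g (kscal c (ginv q g \<phi>)) = kscal c \<phi>"
    using klinD(3)[OF g a(1) ginv_props(1)[OF g a(2)]] ginv_props(2)[OF g a(2)] by simp
  then show "ginv q g (kscal c \<phi>) = kscal c (ginv q g \<phi>)"
    using ginv_props(3)[OF g kscal_Emaps[OF ginv_props(1)[OF g a(2)] a(1)]] by simp
qed

lemma klin_comp:
  fixes g f :: "('a::{finite,field} \<Rightarrow> 'a) \<Rightarrow> ('a \<Rightarrow> 'a)"
  assumes f: "klin_bij q f" and g: "klin_bij q g"
  shows "klin_bij q (\<lambda>\<phi>. g (f \<phi>))"
  unfolding klin_bij_def
proof (intro conjI ballI)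
  show "bij_betw (\<lambda>\<phi>. g (f \<phi>)) (Emaps q) (Emaps q)"
    using bij_betw_trans[OF klinD(1)[OF f] klinD(1)[OF g]] by (simp add: comp_def)
next
  fix \<phi> \<psi> :: "'a \<Rightarrow> 'a" assume a: "\<phi> \<in> Emaps q" "\<psi> \<in> Emaps q"
  then show "g (f (fadd \<phi> \<psi>)) = fadd (g (f \<phi>)) (g (f \<psi>))"
    using klinD(2)[OF f a] klinD(2)[OF g klinD(4)[OF f a(1)] klinD(4)[OF f a(2)]] by simp
next
  fix c :: 'a and \<phi> :: "'a \<Rightarrow> 'a" assume a: "c \<in> Kf q" "\<phi> \<in> Emaps q"
  then show "g (f (kscal c \<phi>)) = kscal c (g (f \<phi>))"
    using klinD(3)[OF f a] klinD(3)[OF g a(1) klinD(4)[OF f a(2)]] by simp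
qed

section \<open>Images of sets of points\<close>

lemma pimg_comp: "pimg g (pimg f S) = pimg (\<lambda>x. g (f x)) S"
  unfolding pimg_def by (auto simp: image_image)

lemma pimg_cong:
  assumes S: "S \<subseteq> Pow A" and e: "\<And>x. x \<in> A \<Longrightarrow> f x = f' x"
  shows "pimg f S = pimg f' S"
  unfolding pimg_def
proof (rule image_cong[OF refl])
  fix p assume "p \<in> S"
  then have p: "p \<subseteq> A" using S by blast
  show "f ` p = f' ` p" by (rule image_cong[OF refl]) (use p e in blast)
qed

lemma pimg_id: "S \<subseteq> Pow A \<Longrightarrow> (\<And>x. x \<in> A \<Longrightarrow> f x = x) \<Longrightarrow> pimg f S = S"
  using pimg_cong[of S A f "\<lambda>x. x"] unfolding pimg_def by simp

lemma pimg_Pow: "S \<subseteq> Pow (Emaps q) \<Longrightarrow> (\<And>x. x \<in> Emaps q \<Longrightarrow> f x \<in> Emaps q) \<Longrightarrow> pimg f S \<subseteq> Pow (Emaps q)"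
  unfolding pimg_def by auto

lemma pimg_ginv_g:
  fixes g :: "('a::{finite,field} \<Rightarrow> 'a) \<Rightarrow> ('a \<Rightarrow> 'a)"
  assumes g: "klin_bij q g" and S: "S \<subseteq> Pow (Emaps q)"
  shows "pimg (ginv q g) (pimg g S) = S"
  unfolding pimg_comp by (rule pimg_id[OF S]) (rule ginv_props(3)[OF g])

lemma pimg_inj:
  fixes g :: "('a::{finite,field} \<Rightarrow> 'a) \<Rightarrow> ('a \<Rightarrow> 'a)"
  assumes g: "klin_bij q g" and S: "S \<subseteq> Pow (Emaps q)" "S' \<subseteq> Pow (Emaps q)"
    and eq: "pimg g S = pimg g S'"
  shows "S = S'"
proof -
  have "S = pimg (ginv q g) (pimg g S)" using pimg_ginv_g[OF g S(1)] by simp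
  also have "\<dots> = pimg (ginv q g) (pimg g S')" by (simp only: eq)
  also have "\<dots> = S'" using pimg_ginv_g[OF g S(2)] by simp
  finally show ?thesis .
qed

lemma simg_comp: "simg g (simg f D) = simg (\<lambda>x. g (f x)) D"
  unfolding simg_def by (auto simp: image_image pimg_comp)

lemma simg_cong:
  assumes D: "D \<subseteq> Pow (Pow A)" and e: "\<And>x. x \<in> A \<Longrightarrow> f x = f' x"
  shows "simg f D = simg f' D"
  unfolding simg_def
proof (rule image_cong[OF refl])
  fix S assume "S \<in> D"
  then have S: "S \<subseteq> Pow A" using D by blast
  show "pimg f S = pimg f' S" by (rule pimg_cong[OF S e])
qed


type_synonym 'a mp = "'a \<Rightarrow> 'a"

definition smT :: "nat \<Rightarrow> ('a::{finite,field} mp \<Rightarrow> 'a mp) \<Rightarrow> ('a \<Rightarrow> 'a mp \<Rightarrow> 'a mp) \<Rightarrow> 'a \<Rightarrow> 'a mp \<Rightarrow> 'a mp" where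
  "smT q g sm a \<phi> = g (sm a (ginv q g \<phi>))"

lemma fstruct_T:
  fixes g :: "'a::{finite,field} mp \<Rightarrow> 'a mp"
  assumes g: "klin_bij q g" and sm: "fstruct q sm"
  shows "fstruct q (smT q g sm)"
proof -
  note gi = ginv_props[OF g] and gil = klin_ginv[OF g]
  note S = fstructD[OF sm]
  show ?thesis unfolding fstruct_def smT_def
  proof (intro conjI allI ballI)
    fix a and \<phi> :: "'a mp" assume p: "\<phi> \<in> Emaps q"
    show "g (sm a (ginv q g \<phi>)) \<in> Emaps q" using klinD(4)[OF g S(1)[OF gi(1)[OF p]]] .
  next
    fix a and \<phi> \<psi> :: "'a mp" assume p: "\<phi> \<in> Emaps q" "\<psi> \<in> Emaps q"
    show "g (sm a (ginv q g (fadd \<phi> \<psi>))) = fadd (g (sm a (ginv q g \<phi>))) (g (sm a (ginv q g \<psi>)))"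
      using klinD(2)[OF gil p] S(2)[OF gi(1)[OF p(1)] gi(1)[OF p(2)]]
        klinD(2)[OF g S(1)[OF gi(1)[OF p(1)]] S(1)[OF gi(1)[OF p(2)]]] by simp
  next
    fix a b and \<phi> :: "'a mp" assume p: "\<phi> \<in> Emaps q"
    show "g (sm (a + b) (ginv q g \<phi>)) = fadd (g (sm a (ginv q g \<phi>))) (g (sm b (ginv q g \<phi>)))"
      using S(3)[OF gi(1)[OF p]] klinD(2)[OF g S(1)[OF gi(1)[OF p]] S(1)[OF gi(1)[OF p]]] by simp
  next
    fix a b and \<phi> :: "'a mp" assume p: "\<phi> \<in> Emaps q"
    show "g (sm (a * b) (ginv q g \<phi>)) = g (sm a (ginv q g (g (sm b (ginv q g \<phi>)))))"
      using S(4)[OF gi(1)[OF p]] gi(3)[OF S(1)[OF gi(1)[OF p]]] by simp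
  next
    fix \<phi> :: "'a mp" assume p: "\<phi> \<in> Emaps q"
    show "g (sm 1 (ginv q g \<phi>)) = \<phi>" using S(5)[OF gi(1)[OF p]] gi(2)[OF p] by simp
  next
    fix c :: 'a and \<phi> :: "'a mp" assume p: "c \<in> Kf q" "\<phi> \<in> Emaps q"
    show "g (sm c (ginv q g \<phi>)) = kscal c \<phi>"
      using S(6)[OF p(1) gi(1)[OF p(2)]] klinD(3)[OF g p(1) gi(1)[OF p(2)]] gi(2)[OF p(2)] by simp
  qed
qed

lemma Fpt_T:
  fixes g :: "'a::{finite,field} mp \<Rightarrow> 'a mp"
  assumes g: "klin_bij q g" and sm: "fstruct q sm" and p: "\<phi> \<in> Emaps q"
  shows "Fpt q (smT q g sm) (g \<phi>) = pimg g (Fpt q sm \<phi>)"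
proof -
  have "pt q (smT q g sm l (g \<phi>)) = g ` pt q (sm l \<phi>)" for l
    unfolding smT_def using ginv_props(3)[OF g p] klin_img_pt[OF g fstructD(1)[OF sm p]] by simp
  then show ?thesis unfolding Fpt_def pimg_def by auto
qed

lemma Fpt_Pow: "fstruct q sm \<Longrightarrow> \<phi> \<in> Emaps q \<Longrightarrow> Fpt q sm \<phi> \<subseteq> Pow (Emaps q)"
  using Fpt_subset by blast

lemma spread_Pow: "fstruct q sm \<Longrightarrow> spread_of q sm \<subseteq> Pow (Pow (Emaps q))"
  unfolding spread_of_def using Fpt_Pow by blast

lemma spread_T:
  fixes g :: "'a::{finite,field} mp \<Rightarrow> 'a mp"
  assumes g: "klin_bij q g" and sm: "fstruct q sm"
  shows "spread_of q (smT q g sm) = simg g (spread_of q sm)"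
proof (intro equalityI subsetI)
  fix S assume "S \<in> spread_of q (smT q g sm)"
  then obtain \<psi> where psi: "S = Fpt q (smT q g sm) \<psi>" "\<psi> \<in> Emaps q" "\<psi> \<noteq> fzero"
    unfolding spread_of_def by blast
  let ?\<phi> = "ginv q g \<psi>"
  have ph: "?\<phi> \<in> Emaps q" "g ?\<phi> = \<psi>" using ginv_props[OF g] psi(2) by auto
  have "?\<phi> \<noteq> fzero" using ph psi(3) klin_fzero[OF g] by auto
  moreover have "S = pimg g (Fpt q sm ?\<phi>)" using Fpt_T[OF g sm ph(1)] ph(2) psi(1) by simp
  ultimately show "S \<in> simg g (spread_of q sm)" unfolding simg_def spread_of_def using ph(1) by blast
next
  fix S assume "S \<in> simg g (spread_of q sm)"
  then obtain \<phi> where phi: "S = pimg g (Fpt q sm \<phi>)" "\<phi> \<in> Emaps q" "\<phi> \<noteq> fzero"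
    unfolding simg_def spread_of_def by blast
  have "g \<phi> \<noteq> fzero" using klin_fzero_iff[OF g phi(2)] phi(3) by simp
  moreover have "S = Fpt q (smT q g sm) (g \<phi>)" using Fpt_T[OF g sm phi(2)] phi(1) by simp
  ultimately show "S \<in> spread_of q (smT q g sm)" unfolding spread_of_def using klinD(4)[OF g phi(2)] by blast
qed

lemma desarg_T:
  fixes g :: "'a::{finite,field} mp \<Rightarrow> 'a mp"
  assumes g: "klin_bij q g" and sm: "fstruct q sm"
  shows "desarg_spread q (simg g (spread_of q sm))"
  unfolding desarg_spread_def using fstruct_T[OF g sm] spread_T[OF g sm] by metis


lemma lincomb_kscal_Emaps:
  "set cs \<subseteq> Kf q \<Longrightarrow> set ws \<subseteq> Emaps q \<Longrightarrow> lincomb kscal cs ws \<in> Emaps q"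
proof (induction ws arbitrary: cs)
  case Nil then show ?case by (cases cs) (simp_all add: fzero_Emaps)
next
  case (Cons w ws) then show ?case
    by (cases cs) (simp_all add: fzero_Emaps fadd_Emaps kscal_Emaps)
qed

lemma lincomb_sm_Emaps:
  "fstruct q sm \<Longrightarrow> set vs \<subseteq> Emaps q \<Longrightarrow> lincomb sm cs vs \<in> Emaps q"
proof (induction vs arbitrary: cs)
  case Nil then show ?case by (cases cs) (simp_all add: fzero_Emaps)
next
  case (Cons w ws) then show ?case
    by (cases cs) (simp_all add: fzero_Emaps fadd_Emaps fstructD(1))
qed

lemma g_lincomb_kscal:
  fixes g :: "'a::{finite,field} mp \<Rightarrow> 'a mp"
  assumes g: "klin_bij q g"
  shows "set cs \<subseteq> Kf q \<Longrightarrow> set ws \<subseteq> Emaps q \<Longrightarrow> g (lincomb kscal cs ws) = lincomb kscal cs (map g ws)"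
proof (induction ws arbitrary: cs)
  case Nil then show ?case by (cases cs) (simp_all add: klin_fzero[OF g])
next
  case (Cons w ws) then show ?case
    by (cases cs) (simp_all add: klin_fzero[OF g] klinD(2)[OF g] klinD(3)[OF g] kscal_Emaps lincomb_kscal_Emaps)
qed

lemma g_lincomb_sm:
  fixes g :: "'a::{finite,field} mp \<Rightarrow> 'a mp"
  assumes g: "klin_bij q g" and sm: "fstruct q sm"
  shows "set vs \<subseteq> Emaps q \<Longrightarrow> g (lincomb sm cs vs) = lincomb (smT q g sm) cs (map g vs)"
proof (induction vs arbitrary: cs)
  case Nil then show ?case by (cases cs) (simp_all add: klin_fzero[OF g])
next
  case (Cons w ws)
  show ?case
  proof (cases cs)
    case Nil then show ?thesis by (simp add: klin_fzero[OF g])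
  next
    case (Cons c cs')
    have w: "w \<in> Emaps q" "set ws \<subseteq> Emaps q" using Cons.prems by auto
    have "g (lincomb sm cs (w # ws)) = fadd (g (sm c w)) (g (lincomb sm cs' ws))"
      unfolding Cons by (simp add: klinD(2)[OF g fstructD(1)[OF sm w(1)] lincomb_sm_Emaps[OF sm w(2)]])
    also have "g (sm c w) = smT q g sm c (g w)"
      unfolding smT_def using ginv_props(3)[OF g w(1)] by simp
    also have "g (lincomb sm cs' ws) = lincomb (smT q g sm) cs' (map g ws)"
      using Cons.IH w(2) by simp
    finally show ?thesis unfolding Cons by simp
  qed
qed

lemma Kspan_T:
  fixes g :: "'a::{finite,field} mp \<Rightarrow> 'a mp"
  assumes g: "klin_bij q g" and ws: "set ws \<subseteq> Emaps q"
  shows "Kspan q (map g ws) = g ` Kspan q ws"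
proof (intro equalityI subsetI)
  fix x assume "x \<in> Kspan q (map g ws)"
  then obtain cs where cs: "x = lincomb kscal cs (map g ws)" "length cs = length ws" "set cs \<subseteq> Kf q"
    unfolding Kspan_def by auto
  then have "x = g (lincomb kscal cs ws)" using g_lincomb_kscal[OF g _ ws] by simp
  moreover have "lincomb kscal cs ws \<in> Kspan q ws" unfolding Kspan_def using cs by blast
  ultimately show "x \<in> g ` Kspan q ws" by blast
next
  fix x assume "x \<in> g ` Kspan q ws"
  then obtain cs where cs: "x = g (lincomb kscal cs ws)" "length cs = length ws" "set cs \<subseteq> Kf q"
    unfolding Kspan_def by auto
  then have "x = lincomb kscal cs (map g ws)" using g_lincomb_kscal[OF g _ ws] by simp
  then show "x \<in> Kspan q (map g ws)" unfolding Kspan_def using cs by auto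
qed

lemma Kspan_Emaps: "set ws \<subseteq> Emaps q \<Longrightarrow> Kspan q ws \<subseteq> Emaps q"
  unfolding Kspan_def using lincomb_kscal_Emaps by blast

lemma Kindep_T:
  fixes g :: "'a::{finite,field} mp \<Rightarrow> 'a mp"
  assumes g: "klin_bij q g" and ws: "set ws \<subseteq> Emaps q" and ind: "Kindep q ws"
  shows "Kindep q (map g ws)"
  unfolding Kindep_def
proof (intro allI impI)
  fix cs assume a: "length cs = length (map g ws) \<and> set cs \<subseteq> Kf q \<and> lincomb kscal cs (map g ws) = fzero"
  then have "g (lincomb kscal cs ws) = fzero" using g_lincomb_kscal[OF g _ ws] by simp
  then have "lincomb kscal cs ws = fzero"
    using klin_fzero_iff[OF g lincomb_kscal_Emaps[OF _ ws]] a by blast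
  then show "set cs \<subseteq> {0}" using ind a unfolding Kindep_def by simp
qed

lemma subgeometry_T:
  fixes g :: "'a::{finite,field} mp \<Rightarrow> 'a mp"
  assumes g: "klin_bij q g" and sm: "fstruct q sm" and sg: "subgeometry q n sm R"
  shows "subgeometry q n (smT q g sm) (simg g R)"
proof -
  obtain ws where ws: "length ws = n" "set ws \<subseteq> Emaps q" "Kindep q ws"
    "Fspans sm (Kspan q ws) (Emaps q)" "R = {Fpt q sm w | w. w \<in> Kspan q ws \<and> w \<noteq> fzero}"
    using sg unfolding subgeometry_def by blast
  let ?ws = "map g ws"
  have KS: "Kspan q ?ws = g ` Kspan q ws" by (rule Kspan_T[OF g ws(2)])
  have KE: "Kspan q ws \<subseteq> Emaps q" by (rule Kspan_Emaps[OF ws(2)])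
  have "length ?ws = n" using ws by simp
  moreover have "set ?ws \<subseteq> Emaps q" using ws(2) klinD(4)[OF g] by auto
  moreover have "Kindep q ?ws" by (rule Kindep_T[OF g ws(2,3)])
  moreover have "Fspans (smT q g sm) (Kspan q ?ws) (Emaps q)"
    unfolding Fspans_def
  proof
    fix \<phi> :: "'a mp" assume p: "\<phi> \<in> Emaps q"
    obtain cs vs where cv: "length cs = length vs" "set vs \<subseteq> Kspan q ws" "ginv q g \<phi> = lincomb sm cs vs"
      using ws(4) ginv_props(1)[OF g p] unfolding Fspans_def by blast
    have "\<phi> = g (lincomb sm cs vs)" using cv(3) ginv_props(2)[OF g p] by simp
    also have "\<dots> = lincomb (smT q g sm) cs (map g vs)"
      using g_lincomb_sm[OF g sm] cv(2) KE by blast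
    finally show "\<exists>cs vs. length cs = length vs \<and> set vs \<subseteq> Kspan q ?ws \<and> \<phi> = lincomb (smT q g sm) cs vs"
      using cv KS by (intro exI[of _ cs] exI[of _ "map g vs"]) auto
  qed
  moreover have "simg g R = {Fpt q (smT q g sm) w | w. w \<in> Kspan q ?ws \<and> w \<noteq> fzero}"
  proof (intro equalityI subsetI)
    fix S assume "S \<in> simg g R"
    then obtain w where w: "S = pimg g (Fpt q sm w)" "w \<in> Kspan q ws" "w \<noteq> fzero"
      unfolding simg_def ws(5) by blast
    have "S = Fpt q (smT q g sm) (g w)" using Fpt_T[OF g sm] w KE by auto
    moreover have "g w \<noteq> fzero" using klin_fzero_iff[OF g] w KE by auto
    ultimately show "S \<in> {Fpt q (smT q g sm) w | w. w \<in> Kspan q ?ws \<and> w \<noteq> fzero}"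
      using KS w by blast
  next
    fix S assume "S \<in> {Fpt q (smT q g sm) w | w. w \<in> Kspan q ?ws \<and> w \<noteq> fzero}"
    then obtain w' where w': "S = Fpt q (smT q g sm) w'" "w' \<in> Kspan q ?ws" "w' \<noteq> fzero"
      by blast
    then obtain w where "w' = g w" "w \<in> Kspan q ws" using KS by blast
    then have w: "S = Fpt q (smT q g sm) (g w)" "w \<in> Kspan q ws" "g w \<noteq> fzero" using w' by auto
    have "S = pimg g (Fpt q sm w)" using Fpt_T[OF g sm] w KE by auto
    moreover have "w \<noteq> fzero" using klin_fzero[OF g] w by auto
    ultimately show "S \<in> simg g R" unfolding simg_def ws(5) using w by blast
  qed
  ultimately show ?thesis unfolding subgeometry_def by blast
qed


definition conj_f :: "nat \<Rightarrow> ('a::{finite,field} mp \<Rightarrow> 'a mp) \<Rightarrow> ('a mp \<Rightarrow> 'a mp) \<Rightarrow> 'a mp \<Rightarrow> 'a mp" where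
  "conj_f q g f \<phi> = g (f (ginv q g \<phi>))"

lemma klin_conj:
  fixes g f :: "'a::{finite,field} mp \<Rightarrow> 'a mp"
  assumes g: "klin_bij q g" and f: "klin_bij q f"
  shows "klin_bij q (conj_f q g f)"
  unfolding conj_f_def using klin_comp[OF klin_comp[OF klin_ginv[OF g] f] g] by simp

lemma pimg_conj:
  fixes g f :: "'a::{finite,field} mp \<Rightarrow> 'a mp"
  assumes g: "klin_bij q g" and S: "S \<subseteq> Pow (Emaps q)"
  shows "pimg (conj_f q g f) (pimg g S) = pimg g (pimg f S)"
  unfolding pimg_comp conj_f_def by (rule pimg_cong[OF S]) (simp add: ginv_props(3)[OF g])

lemma pimg_conj_pow:
  fixes g f :: "'a::{finite,field} mp \<Rightarrow> 'a mp"
  assumes g: "klin_bij q g" and f: "klin_bij q f" and S: "S \<subseteq> Pow (Emaps q)"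
  shows "(pimg (conj_f q g f) ^^ k) (pimg g S) = pimg g ((pimg f ^^ k) S) \<and> (pimg f ^^ k) S \<subseteq> Pow (Emaps q)"
proof (induction k)
  case 0 then show ?case using S by simp
next
  case (Suc k)
  then show ?case using pimg_conj[OF g, of "(pimg f ^^ k) S" f] pimg_Pow[of "(pimg f ^^ k) S" q f] klinD(4)[OF f]
    by simp
qed

lemma induced_T:
  fixes g f :: "'a::{finite,field} mp \<Rightarrow> 'a mp"
  assumes g: "klin_bij q g" and sm: "fstruct q sm" and ind: "induced_semilinear q sm f"
  shows "induced_semilinear q (smT q g sm) (conj_f q g f)"
proof -
  obtain \<sigma> h where h: "field_aut \<sigma>" "bij_betw h (Emaps q) (Emaps q)"
      "\<forall>\<phi>\<in>Emaps q. \<forall>\<psi>\<in>Emaps q. h (fadd \<phi> \<psi>) = fadd (h \<phi>) (h \<psi>)"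
      "\<forall>l. \<forall>\<phi>\<in>Emaps q. h (sm l \<phi>) = sm (\<sigma> l) (h \<phi>)"
      "\<forall>\<phi>\<in>Emaps q. \<phi> \<noteq> fzero \<longrightarrow> pimg f (Fpt q sm \<phi>) = Fpt q sm (h \<phi>)"
    using ind unfolding induced_semilinear_def by blast
  note gi = ginv_props[OF g]
  have hE: "h \<phi> \<in> Emaps q" if "\<phi> \<in> Emaps q" for \<phi> using h(2) that bij_betwE by blast
  let ?h = "\<lambda>\<psi>. g (h (ginv q g \<psi>))"
  have "bij_betw ?h (Emaps q) (Emaps q)"
  proof -
    have "bij_betw (ginv q g) (Emaps q) (Emaps q)" using klinD(1)[OF klin_ginv[OF g]] .
    from bij_betw_trans[OF bij_betw_trans[OF this h(2)] klinD(1)[OF g]] show ?thesis by (simp add: comp_def)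
  qed
  moreover have "\<forall>\<phi>\<in>Emaps q. \<forall>\<psi>\<in>Emaps q. ?h (fadd \<phi> \<psi>) = fadd (?h \<phi>) (?h \<psi>)"
  proof (intro ballI)
    fix \<phi> \<psi> :: "'a mp" assume p: "\<phi> \<in> Emaps q" "\<psi> \<in> Emaps q"
    show "?h (fadd \<phi> \<psi>) = fadd (?h \<phi>) (?h \<psi>)"
      using klinD(2)[OF klin_ginv[OF g] p] h(3) gi(1)[OF p(1)] gi(1)[OF p(2)]
        klinD(2)[OF g hE[OF gi(1)[OF p(1)]] hE[OF gi(1)[OF p(2)]]] by simp
  qed
  moreover have "\<forall>l. \<forall>\<phi>\<in>Emaps q. ?h (smT q g sm l \<phi>) = smT q g sm (\<sigma> l) (?h \<phi>)"
  proof (intro allI ballI)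
    fix l and \<phi> :: "'a mp" assume p: "\<phi> \<in> Emaps q"
    show "?h (smT q g sm l \<phi>) = smT q g sm (\<sigma> l) (?h \<phi>)"
      unfolding smT_def
      using gi(3)[OF fstructD(1)[OF sm gi(1)[OF p]]] gi(3)[OF hE[OF gi(1)[OF p]]] h(4) gi(1)[OF p] by simp
  qed
  moreover have "\<forall>\<psi>\<in>Emaps q. \<psi> \<noteq> fzero \<longrightarrow> pimg (conj_f q g f) (Fpt q (smT q g sm) \<psi>) = Fpt q (smT q g sm) (?h \<psi>)"
  proof (intro ballI impI)
    fix \<psi> :: "'a mp" assume p: "\<psi> \<in> Emaps q" "\<psi> \<noteq> fzero"
    let ?\<phi> = "ginv q g \<psi>"
    have ph: "?\<phi> \<in> Emaps q" "?\<phi> \<noteq> fzero" using gi(1)[OF p(1)] gi(2)[OF p(1)] p(2) klin_fzero[OF g] by auto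
    have "Fpt q (smT q g sm) \<psi> = pimg g (Fpt q sm ?\<phi>)" using Fpt_T[OF g sm ph(1)] gi(2)[OF p(1)] by simp
    then have "pimg (conj_f q g f) (Fpt q (smT q g sm) \<psi>) = pimg g (pimg f (Fpt q sm ?\<phi>))"
      using pimg_conj[OF g Fpt_Pow[OF sm ph(1)]] by simp
    also have "\<dots> = pimg g (Fpt q sm (h ?\<phi>))" using h(5) ph by simp
    also have "\<dots> = Fpt q (smT q g sm) (?h \<psi>)" using Fpt_T[OF g sm hE[OF ph(1)]] by simp
    finally show "pimg (conj_f q g f) (Fpt q (smT q g sm) \<psi>) = Fpt q (smT q g sm) (?h \<psi>)" .
  qed
  ultimately show ?thesis unfolding induced_semilinear_def using h(1) by blast
qed

lemma cond_D2_T: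
  fixes g :: "'a::{finite,field} mp \<Rightarrow> 'a mp"
  assumes g: "klin_bij q g" and c: "cond_D2 q n D R"
  shows "cond_D2 q n (simg g D) (simg g R)"
proof -
  obtain sm f where sm: "fstruct q sm" and D: "D = spread_of q sm" and f: "klin_bij q f"
    and fD: "simg f D = D" and ind: "induced_semilinear q sm f"
    and pn: "\<forall>S\<in>D. (pimg f ^^ n) S = S"
    and pk: "\<forall>k. 0 < k \<and> k < n \<longrightarrow> (\<exists>S\<in>D. (pimg f ^^ k) S \<noteq> S)"
    and fixR: "{S \<in> D. pimg f S = S} = R" and sg: "subgeometry q n sm R"
    using c unfolding cond_D2_def by blast
  have DP: "D \<subseteq> Pow (Pow (Emaps q))" using spread_Pow[OF sm] D by simp
  let ?f = "conj_f q g f"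
  let ?sm = "smT q g sm"
  have "fstruct q ?sm" by (rule fstruct_T[OF g sm])
  moreover have "simg g D = spread_of q ?sm" using spread_T[OF g sm] D by simp
  moreover have "klin_bij q ?f" by (rule klin_conj[OF g f])
  moreover have "simg ?f (simg g D) = simg g D"
  proof -
    have "simg ?f (simg g D) = simg g (simg f D)"
      unfolding simg_def image_image using pimg_conj[OF g] DP by (intro image_cong) auto
    then show ?thesis using fD by simp
  qed
  moreover have "induced_semilinear q ?sm ?f" by (rule induced_T[OF g sm ind])
  moreover have "\<forall>S\<in>simg g D. (pimg ?f ^^ n) S = S"
  proof
    fix S' assume "S' \<in> simg g D"
    then obtain S where S: "S \<in> D" "S' = pimg g S" unfolding simg_def by blast
    then show "(pimg ?f ^^ n) S' = S'" using pimg_conj_pow[OF g f, of S n] DP pn by auto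
  qed
  moreover have "\<forall>k. 0 < k \<and> k < n \<longrightarrow> (\<exists>S\<in>simg g D. (pimg ?f ^^ k) S \<noteq> S)"
  proof (intro allI impI)
    fix k assume k: "0 < k \<and> k < n"
    then obtain S where S: "S \<in> D" "(pimg f ^^ k) S \<noteq> S" using pk by blast
    have SP: "S \<subseteq> Pow (Emaps q)" using S DP by blast
    have e: "(pimg ?f ^^ k) (pimg g S) = pimg g ((pimg f ^^ k) S)" "(pimg f ^^ k) S \<subseteq> Pow (Emaps q)"
      using pimg_conj_pow[OF g f SP, of k] by auto
    have "(pimg ?f ^^ k) (pimg g S) \<noteq> pimg g S"
    proof
      assume "(pimg ?f ^^ k) (pimg g S) = pimg g S"
      then have "pimg g ((pimg f ^^ k) S) = pimg g S" using e by simp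
      then have "(pimg f ^^ k) S = S" using pimg_inj[OF g e(2) SP] by simp
      with S show False by simp
    qed
    moreover have "pimg g S \<in> simg g D" unfolding simg_def using S by blast
    ultimately show "\<exists>S\<in>simg g D. (pimg ?f ^^ k) S \<noteq> S" by blast
  qed
  moreover have "{S \<in> simg g D. pimg ?f S = S} = simg g R"
  proof (intro equalityI subsetI)
    fix S' assume "S' \<in> {S \<in> simg g D. pimg ?f S = S}"
    then obtain S where S: "S \<in> D" "S' = pimg g S" "pimg ?f S' = S'" unfolding simg_def by blast
    have SP: "S \<subseteq> Pow (Emaps q)" using S DP by blast
    have "pimg g (pimg f S) = pimg g S" using S pimg_conj[OF g SP] by simp
    then have "pimg f S = S" using pimg_inj[OF g pimg_Pow[OF SP klinD(4)[OF f]] SP] by simp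
    then have "S \<in> R" using fixR S by blast
    then show "S' \<in> simg g R" unfolding simg_def using S by blast
  next
    fix S' assume "S' \<in> simg g R"
    then obtain S where S: "S \<in> R" "S' = pimg g S" unfolding simg_def by blast
    have SD: "S \<in> D" "pimg f S = S" using S fixR by blast+
    have SP: "S \<subseteq> Pow (Emaps q)" using SD DP by blast
    have "pimg ?f S' = S'" using S SD pimg_conj[OF g SP] by simp
    moreover have "S' \<in> simg g D" unfolding simg_def using S SD by blast
    ultimately show "S' \<in> {S \<in> simg g D. pimg ?f S = S}" by blast
  qed
  moreover have "subgeometry q n ?sm (simg g R)" by (rule subgeometry_T[OF g sm sg])
  ultimately show ?thesis unfolding cond_D2_def by blast
qed


definition smL :: "'a::field \<Rightarrow> 'a mp \<Rightarrow> 'a mp" where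
  "smL a \<phi> = (\<lambda>x. a * \<phi> x)"

lemma fstruct_L: "fstruct q (smL :: 'a::{finite,field} \<Rightarrow> _)"
  unfolding fstruct_def
proof (intro conjI allI ballI)
  fix a and \<phi> :: "'a mp" assume "\<phi> \<in> Emaps q"
  then show "smL a \<phi> \<in> Emaps q" unfolding Emaps_def smL_def by (auto simp: distrib_left mult.left_commute)
next
  fix a and \<phi> \<psi> :: "'a mp"
  show "smL a (fadd \<phi> \<psi>) = fadd (smL a \<phi>) (smL a \<psi>)" unfolding smL_def fadd_def by (simp add: distrib_left)
next
  fix a b and \<phi> :: "'a mp"
  show "smL (a + b) \<phi> = fadd (smL a \<phi>) (smL b \<phi>)" unfolding smL_def fadd_def by (simp add: distrib_right)
next
  fix a b and \<phi> :: "'a mp"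
  show "smL (a * b) \<phi> = smL a (smL b \<phi>)" unfolding smL_def by (simp add: mult.assoc)
next
  fix \<phi> :: "'a mp"
  show "smL 1 \<phi> = \<phi>" unfolding smL_def by simp
next
  fix c and \<phi> :: "'a mp"
  show "smL c \<phi> = kscal c \<phi>" unfolding smL_def kscal_def by simp
qed

definition Tm :: "nat \<Rightarrow> nat \<Rightarrow> 'a::{finite,field} \<Rightarrow> 'a mp" where
  "Tm q n m = (\<lambda>x. tr q n (m * x))"

context ffs
begin

abbreviation T :: "'a \<Rightarrow> 'a mp" where "T \<equiv> Tm q n"

lemma Emaps_iff: "\<phi> \<in> Emaps q \<longleftrightarrow> (\<forall>x y. \<phi> (x + y) = \<phi> x + \<phi> y) \<and> (\<forall>c\<in>KK. \<forall>x. \<phi> (c * x) = c * \<phi> x)"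
  unfolding Emaps_def by simp

lemma T_Emaps: "T m \<in> Emaps q"
  unfolding Emaps_iff Tm_def by (auto simp: distrib_left tr_add mult.left_commute tr_Kmult)

lemma T_nonzero: "T m = fzero \<longleftrightarrow> m = 0"
proof
  assume a: "T m = fzero"
  have "trr (m * x) = 0" for x using fun_cong[OF a, of x] unfolding Tm_def fzero_def by simp
  then show "m = 0" by (rule tr_nondeg)
qed (simp add: Tm_def fzero_def tr_zero)

lemma T_add: "T (a + b) = fadd (T a) (T b)"
  unfolding Tm_def fadd_def by (simp add: distrib_right tr_add)

lemma T_kscal: "c \<in> KK \<Longrightarrow> kscal c (T m) = T (c * m)"
  unfolding Tm_def kscal_def by (simp add: tr_Kmult mult.assoc)

lemma T_inj: "T a = T b \<Longrightarrow> a = b"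
proof -
  assume e: "T a = T b"
  have "trr (a * x) = trr (b * x)" for x using fun_cong[OF e, of x] unfolding Tm_def by simp
  then show "a = b" by (rule tr_uniq)
qed

lemma Fun_T: "\<psi> \<in> Fun \<Longrightarrow> \<exists>m. \<psi> = T m"
proof -
  assume a: "\<psi> \<in> Fun"
  obtain m where "\<psi> = (\<lambda>x. trr (m * x))" using fun_repr[OF a] by (elim exE)
  then show ?thesis by (intro exI[of _ m]) (simp add: Tm_def)
qed

lemma id_Emaps: "(\<lambda>x::'a. x) \<in> Emaps q" unfolding Emaps_def by simp

lemma id_nonzero: "(\<lambda>x::'a. x) \<noteq> fzero"
proof
  assume "(\<lambda>x::'a. x) = fzero"
  from fun_cong[OF this, of 1] show False unfolding fzero_def by simp
qed

lemma Iset_in_D1: "(Iset q :: 'a mp set set) \<in> spread_of q smL"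
proof -
  have e: "(Iset q :: 'a mp set set) = Fpt q smL (\<lambda>x. x)" unfolding Iset_def Fpt_def smL_def by simp
  show ?thesis unfolding spread_of_def mem_Collect_eq
    by (intro exI[of _ "\<lambda>x. x"]) (simp only: e id_Emaps id_nonzero simp_thms)
qed

lemma Fpt_L_T: "Fpt q smL (T l) = {pt q (\<lambda>x. a * tr q n (l * x)) |a. a \<noteq> 0}"
  unfolding Fpt_def smL_def Tm_def by simp

lemma R1_eq: "(R1 q n :: 'a mp set set set) = {Fpt q smL (T l) | l. l \<noteq> 0}"
  unfolding R1_def Fpt_L_T by simp

lemma R1_sub_D1: "(R1 q n :: 'a mp set set set) \<subseteq> spread_of q smL"
proof
  fix S :: "'a mp set set" assume "S \<in> R1 q n"
  then obtain l where l: "S = Fpt q smL (T l)" "l \<noteq> 0" unfolding R1_eq by blast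
  show "S \<in> spread_of q smL" unfolding spread_of_def mem_Collect_eq
    by (intro exI[of _ "T l"]) (simp add: l T_Emaps T_nonzero)
qed

subsection \<open>Frobenius\<close>

definition frn :: "nat \<Rightarrow> 'a mp \<Rightarrow> 'a mp" where
  "frn k \<phi> = (\<lambda>x. (\<phi> x) ^ (q ^ k))"

lemma frn_Emaps: "\<phi> \<in> Emaps q \<Longrightarrow> frn k \<phi> \<in> Emaps q"
  unfolding Emaps_iff frn_def by (auto simp: frob_add power_mult_distrib Kf_pow)

lemma frn_frn: "frn a (frn b \<phi>) = frn (a + b) \<phi>"
  unfolding frn_def by (simp add: power_mult[symmetric] power_add mult.commute)

lemma frn_n: "frn n \<phi> = \<phi>"
  unfolding frn_def by (simp add: pow_qn)

lemma frn_0: "frn 0 \<phi> = \<phi>"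
  unfolding frn_def by simp

lemma frn_fadd: "frn k (fadd \<phi> \<psi>) = fadd (frn k \<phi>) (frn k \<psi>)"
  unfolding frn_def fadd_def by (simp add: frob_add)

lemma frn_kscal: "c \<in> KK \<Longrightarrow> frn k (kscal c \<phi>) = kscal c (frn k \<phi>)"
  unfolding frn_def kscal_def by (simp add: power_mult_distrib Kf_pow)

lemma frn_smL: "frn k (smL l \<phi>) = smL (l ^ (q ^ k)) (frn k \<phi>)"
  unfolding frn_def smL_def by (simp add: power_mult_distrib)

lemma frn_fzero: "frn k fzero = fzero"
proof -
  have "q ^ k \<noteq> 0" using q_pos by simp
  then have z: "(0::'a) ^ (q ^ k) = 0" by (simp add: power_0_left)
  show ?thesis unfolding frn_def fzero_def by (simp only: z)
qed

lemma klin_Fr: "klin_bij q (frn 1)"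
  unfolding klin_bij_def
proof (intro conjI ballI)
  show "bij_betw (frn 1) (Emaps q) (Emaps q)"
  proof (rule bij_betw_byWitness[where f' = "frn (n - 1)"])
    show "\<forall>a\<in>Emaps q. frn (n - 1) (frn 1 a) = a" using n2 by (simp add: frn_frn frn_n)
    show "\<forall>a\<in>Emaps q. frn 1 (frn (n - 1) a) = a" using n2 by (simp add: frn_frn frn_n)
    show "frn 1 ` Emaps q \<subseteq> Emaps q" using frn_Emaps by blast
    show "frn (n - 1) ` Emaps q \<subseteq> Emaps q" using frn_Emaps by blast
  qed
qed (simp_all add: frn_fadd frn_kscal)

lemma pow_q_surj: "\<exists>l. l \<noteq> 0 \<and> l ^ q = (m::'a)" if "m \<noteq> 0"
proof -
  have qn: "q ^ (n - 1) * q = q ^ n" using n2 by (simp add: power_Suc2[symmetric])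
  have "(m ^ (q ^ (n - 1))) ^ q = m ^ (q ^ (n - 1) * q)" by (rule power_mult[symmetric])
  also have "\<dots> = m ^ (q ^ n)" by (simp only: qn)
  finally have "(m ^ (q ^ (n - 1))) ^ q = m ^ (q ^ n)" .
  then show ?thesis using pow_qn[of m] that by (intro exI[of _ "m ^ (q ^ (n - 1))"]) auto
qed

lemma pimg_Fr_Fpt:
  assumes p: "\<phi> \<in> Emaps q"
  shows "pimg (frn 1) (Fpt q smL \<phi>) = Fpt q smL (frn 1 \<phi>)"
proof -
  have e: "frn 1 ` pt q (smL l \<phi>) = pt q (smL (l ^ q) (frn 1 \<phi>))" for l
    using klin_img_pt[OF klin_Fr fstructD(1)[OF fstruct_L p]] frn_smL[of 1 l \<phi>] by simp
  show ?thesis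
  proof (intro equalityI subsetI)
    fix x assume "x \<in> pimg (frn 1) (Fpt q smL \<phi>)"
    then obtain l where "l \<noteq> 0" "x = pt q (smL (l ^ q) (frn 1 \<phi>))"
      unfolding pimg_def Fpt_def using e by auto
    then show "x \<in> Fpt q smL (frn 1 \<phi>)" unfolding Fpt_def by auto
  next
    fix x assume "x \<in> Fpt q smL (frn 1 \<phi>)"
    then obtain m where m: "m \<noteq> 0" "x = pt q (smL m (frn 1 \<phi>))" unfolding Fpt_def by auto
    then obtain l where l: "l \<noteq> 0" "l ^ q = m" using pow_q_surj by blast
    then have "x = frn 1 ` pt q (smL l \<phi>)" using e m by simp
    then show "x \<in> pimg (frn 1) (Fpt q smL \<phi>)" unfolding pimg_def Fpt_def using l by auto
  qed
qed

lemma pimg_Fr_pow: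
  assumes p: "\<phi> \<in> Emaps q"
  shows "(pimg (frn 1) ^^ k) (Fpt q smL \<phi>) = Fpt q smL (frn k \<phi>)"
proof (induction k)
  case 0 then show ?case by (simp add: frn_0)
next
  case (Suc k)
  then show ?case using pimg_Fr_Fpt[OF frn_Emaps[OF p, of k]] frn_frn[of 1 k \<phi>] by simp
qed

end


lemma lincomb_smL: "length cs = length vs \<Longrightarrow> lincomb smL cs vs x = lc cs (map (\<lambda>v. v x) vs)"
proof (induction cs arbitrary: vs)
  case Nil then show ?case by (simp add: fzero_def)
next
  case (Cons c cs)
  then obtain v vs' where v: "vs = v # vs'" by (cases vs) auto
  then show ?case using Cons by (simp add: fadd_def smL_def)
qed

context ffs
begin

lemma lincomb_T: "set cs \<subseteq> KK \<Longrightarrow> lincomb kscal cs (map T es) = T (lc cs es)"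
proof (induction es arbitrary: cs)
  case Nil then show ?case using T_nonzero[of 0] by (cases cs) simp_all
next
  case (Cons e es)
  show ?case
  proof (cases cs)
    case Nil then show ?thesis using T_nonzero[of 0] by simp
  next
    case (Cons c cs')
    with Cons.prems Cons.IH show ?thesis by (simp add: T_kscal T_add)
  qed
qed

lemma Kspan_T_bas: "Kspan q (map T bas) = range T"
proof (intro equalityI subsetI)
  fix x assume "x \<in> Kspan q (map T bas)"
  then obtain cs where "x = lincomb kscal cs (map T bas)" "set cs \<subseteq> KK" unfolding Kspan_def by auto
  then show "x \<in> range T" using lincomb_T by auto
next
  fix x assume "x \<in> range T"
  then obtain m where m: "x = T m" by auto
  obtain cs where cs: "length cs = n" "set cs \<subseteq> KK" "lc cs bas = m" using bas_repr by blast
  have "x = lincomb kscal cs (map T bas)" using lincomb_T[OF cs(2)] cs m by simp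
  then show "x \<in> Kspan q (map T bas)" unfolding Kspan_def using cs bas(1) by auto
qed

lemma subgeometry_R1: "subgeometry q n smL (R1 q n :: 'a mp set set set)"
proof -
  let ?ws = "map T bas"
  have "length ?ws = n" using bas(1) by simp
  moreover have "set ?ws \<subseteq> Emaps q" using T_Emaps by auto
  moreover have "Kindep q ?ws"
    unfolding Kindep_def
  proof (intro allI impI)
    fix cs assume a: "length cs = length ?ws \<and> set cs \<subseteq> KK \<and> lincomb kscal cs ?ws = fzero"
    then have "T (lc cs bas) = fzero" using lincomb_T[of cs bas] by simp
    then have "lc cs bas = 0" using T_nonzero by simp
    then show "set cs \<subseteq> {0}" using bas(2) a unfolding indepK_def by simp
  qed
  moreover have "Fspans smL (Kspan q ?ws) (Emaps q)"
    unfolding Fspans_def Kspan_T_bas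
  proof
    fix \<phi> :: "'a mp" assume p: "\<phi> \<in> Emaps q"
    have "\<forall>j\<in>{..<n}. \<exists>m. (\<lambda>x. crd j (\<phi> x)) = T m"
    proof
      fix j assume "j \<in> {..<n}"
      then have cj: "crd j \<in> Fun" using crd_Fun by simp
      have "(\<lambda>x. crd j (\<phi> x)) \<in> Fun"
        using cj p unfolding Fun_def Emaps_def by auto
      then show "\<exists>m. (\<lambda>x. crd j (\<phi> x)) = T m" by (rule Fun_T)
    qed
    from bchoice[OF this] obtain \<nu> where nu: "\<forall>j\<in>{..<n}. (\<lambda>x. crd j (\<phi> x)) = T (\<nu> j)" ..
    let ?vs = "map (\<lambda>j. T (\<nu> j)) [0..<n]"
    have "\<phi> = lincomb smL bas ?vs"
    proof
      fix x
      have "lincomb smL bas ?vs x = lc bas (map (\<lambda>v. v x) ?vs)"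
        by (rule lincomb_smL) (simp add: bas(1))
      also have "\<dots> = (\<Sum>j<n. bas ! j * T (\<nu> j) x)"
        using lc_sum[of bas "map (\<lambda>v. v x) ?vs"] bas(1) by simp
      also have "\<dots> = (\<Sum>j<n. crd j (\<phi> x) * bas ! j)"
      proof (rule sum.cong[OF refl])
        fix j assume "j \<in> {..<n}"
        then have "crd j (\<phi> x) = T (\<nu> j) x" using nu fun_cong by metis
        then show "bas ! j * T (\<nu> j) x = crd j (\<phi> x) * bas ! j" by (simp add: mult.commute)
      qed
      also have "\<dots> = \<phi> x" using crd_sum[of "\<phi> x"] by simp
      finally show "\<phi> x = lincomb smL bas ?vs x" by simp
    qed
    then show "\<exists>cs vs. length cs = length vs \<and> set vs \<subseteq> range T \<and> \<phi> = lincomb smL cs vs"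
      by (intro exI[of _ bas] exI[of _ ?vs]) (auto simp: bas(1))
  qed
  moreover have "R1 q n = {Fpt q smL w |w. w \<in> Kspan q ?ws \<and> w \<noteq> fzero}"
    unfolding Kspan_T_bas R1_eq using T_nonzero by auto
  ultimately show ?thesis unfolding subgeometry_def by blast
qed

end


context ffs
begin

lemma pow_qn1: "(x::'a) ^ (q * q ^ (n - 1)) = x" "(x::'a) ^ (q ^ (n - 1) * q) = x"
proof -
  obtain m where m: "n = Suc m" using n2 by (cases n) auto
  show "(x::'a) ^ (q * q ^ (n - 1)) = x" using pow_qn[of x] unfolding m by simp
  show "(x::'a) ^ (q ^ (n - 1) * q) = x" using pow_qn[of x] unfolding m by (simp add: mult.commute)
qed

lemma frn1_nonzero: "\<phi> \<in> Emaps q \<Longrightarrow> \<phi> \<noteq> fzero \<Longrightarrow> frn 1 \<phi> \<noteq> fzero"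
  using klin_fzero_iff[OF klin_Fr] by blast

lemma simg_Fr_D1: "simg (frn 1) (spread_of q smL) = spread_of q smL"
proof (intro equalityI subsetI)
  fix S :: "'a mp set set" assume "S \<in> simg (frn 1) (spread_of q smL)"
  then obtain \<phi> where p: "S = pimg (frn 1) (Fpt q smL \<phi>)" "\<phi> \<in> Emaps q" "\<phi> \<noteq> fzero"
    unfolding simg_def spread_of_def by blast
  have "S = Fpt q smL (frn 1 \<phi>)" using p pimg_Fr_Fpt by simp
  then show "S \<in> spread_of q smL" unfolding spread_of_def using frn_Emaps[OF p(2)] frn1_nonzero[OF p(2,3)] by blast
next
  fix S :: "'a mp set set" assume "S \<in> spread_of q smL"
  then obtain \<psi> where p: "S = Fpt q smL \<psi>" "\<psi> \<in> Emaps q" "\<psi> \<noteq> fzero"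
    unfolding spread_of_def by blast
  let ?\<phi> = "frn (n - 1) \<psi>"
  have e: "frn 1 ?\<phi> = \<psi>" using n2 by (simp add: frn_frn frn_n)
  have ph: "?\<phi> \<in> Emaps q" "?\<phi> \<noteq> fzero" using frn_Emaps[OF p(2)] e p(3) frn_fzero by auto
  have "S = pimg (frn 1) (Fpt q smL ?\<phi>)" using pimg_Fr_Fpt[OF ph(1)] e p(1) by simp
  then show "S \<in> simg (frn 1) (spread_of q smL)" unfolding simg_def spread_of_def using ph by blast
qed

lemma field_aut_frob: "field_aut (\<lambda>l::'a. l ^ q)"
  unfolding field_aut_def
proof (intro conjI allI)
  have qn: "q ^ (n - 1) * q = q ^ n" using n2 by (simp add: power_Suc2[symmetric])
  show "bij (\<lambda>l::'a. l ^ q)"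
  proof (rule bij_betw_byWitness[where f' = "\<lambda>l. l ^ (q ^ (n - 1))"])
    show "\<forall>a\<in>UNIV. (a ^ q) ^ (q ^ (n - 1)) = (a::'a)"
      by (simp only: power_mult[symmetric] pow_qn1 ball_UNIV simp_thms)
    show "\<forall>a\<in>UNIV. (a ^ (q ^ (n - 1))) ^ q = (a::'a)"
      by (simp only: power_mult[symmetric] pow_qn1 ball_UNIV simp_thms)
  qed auto
  fix a b :: 'a
  show "(a + b) ^ q = a ^ q + b ^ q" by (rule frob_add1)
  show "(a * b) ^ q = a ^ q * b ^ q" by (rule power_mult_distrib)
qed

lemma induced_Fr: "induced_semilinear q smL (frn 1)"
  unfolding induced_semilinear_def
proof (intro exI conjI)
  show "field_aut (\<lambda>l::'a. l ^ q)" by (rule field_aut_frob)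
  show "bij_betw (frn 1) (Emaps q) (Emaps q)" by (rule klinD(1)[OF klin_Fr])
  show "\<forall>\<phi>\<in>Emaps q. \<forall>\<psi>\<in>Emaps q. frn 1 (fadd \<phi> \<psi>) = fadd (frn 1 \<phi>) (frn 1 \<psi>)"
    by (simp add: frn_fadd)
  show "\<forall>l. \<forall>\<phi>\<in>Emaps q. frn 1 (smL l \<phi>) = smL (l ^ q) (frn 1 \<phi>)"
    using frn_smL[of 1] by simp
  show "\<forall>\<phi>\<in>Emaps q. \<phi> \<noteq> fzero \<longrightarrow> pimg (frn 1) (Fpt q smL \<phi>) = Fpt q smL (frn 1 \<phi>)"
    using pimg_Fr_Fpt by blast
qed

lemma Fr_order: "\<forall>S\<in>spread_of q smL. (pimg (frn 1) ^^ n) S = S"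
  unfolding spread_of_def using pimg_Fr_pow frn_n by auto

lemma Fr_nonfix: "0 < k \<Longrightarrow> k < n \<Longrightarrow> \<exists>S\<in>spread_of q smL. (pimg (frn 1) ^^ k) S \<noteq> S"
proof -
  assume k: "0 < k" "k < n"
  let ?S = "Fpt q smL (\<lambda>x::'a. x)"
  have S: "?S \<in> spread_of q smL" unfolding spread_of_def using id_Emaps id_nonzero by blast
  have "(pimg (frn 1) ^^ k) ?S \<noteq> ?S"
  proof
    assume "(pimg (frn 1) ^^ k) ?S = ?S"
    then have "Fpt q smL (frn k (\<lambda>x. x)) = ?S" using pimg_Fr_pow[OF id_Emaps] by simp
    then obtain l where l: "l \<noteq> 0" "frn k (\<lambda>x. x) = smL l (\<lambda>x::'a. x)"
      using Fpt_eq[OF fstruct_L id_Emaps frn_Emaps[OF id_Emaps]] by blast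
    have ev: "x ^ (q ^ k) = l * x" for x :: 'a
      using fun_cong[OF l(2), of x] unfolding frn_def smL_def by simp
    have "l = 1" using ev[of 1] by simp
    then have "{x :: 'a. x ^ (q ^ k) = x} = UNIV" using ev by auto
    moreover have "q ^ k \<ge> 2"
    proof -
      have "q ^ 1 \<le> q ^ k" using q2 k(1) by (intro power_increasing) auto
      then show ?thesis using q2 by simp
    qed
    ultimately have "card (UNIV :: 'a set) \<le> q ^ k" using card_fix_pow_le[of "q ^ k", where 'a='a] by simp
    moreover have "q ^ k < q ^ n" using q2 k(2) by (intro power_strict_increasing) auto
    ultimately show False using cardF by simp
  qed
  then show ?thesis using S by blast
qed

end


context ffs
begin

lemma T_fixed: "frn 1 (T l) = T l"
  unfolding frn_def Tm_def using tr_pow_q by simp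

lemma Fr_fixed_set: "{S \<in> spread_of q smL. pimg (frn 1) S = S} = (R1 q n :: 'a mp set set set)"
proof (intro equalityI subsetI)
  fix S :: "'a mp set set" assume "S \<in> {S \<in> spread_of q smL. pimg (frn 1) S = S}"
  then obtain \<phi> where p: "S = Fpt q smL \<phi>" "\<phi> \<in> Emaps q" "\<phi> \<noteq> fzero" and fx: "pimg (frn 1) S = S"
    unfolding spread_of_def by blast
  have "Fpt q smL (frn 1 \<phi>) = Fpt q smL \<phi>" using fx p pimg_Fr_Fpt by simp
  then obtain l where l: "l \<noteq> 0" "frn 1 \<phi> = smL l \<phi>"
    using Fpt_eq[OF fstruct_L p(2) frn_Emaps[OF p(2)]] by blast
  have ev: "\<phi> x ^ q = l * \<phi> x" for x using fun_cong[OF l(2), of x] unfolding frn_def smL_def by simp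
  obtain x0 where x0: "\<phi> x0 \<noteq> 0" using p(3) unfolding fzero_def by (metis ext)
  define b where "b = \<phi> x0"
  have b: "b \<noteq> 0" "b ^ q = l * b" using x0 ev[of x0] unfolding b_def by auto
  define \<psi> where "\<psi> = smL (inverse b) \<phi>"
  have psiE: "\<psi> \<in> Emaps q" unfolding \<psi>_def by (rule fstructD(1)[OF fstruct_L p(2)])
  have psiK: "\<psi> x ^ q = \<psi> x" for x
  proof -
    have "\<psi> x ^ q = inverse (b ^ q) * \<phi> x ^ q" unfolding \<psi>_def smL_def by (simp add: power_mult_distrib power_inverse)
    also have "\<dots> = inverse (l * b) * (l * \<phi> x)" using b ev by simp
    also have "\<dots> = inverse b * \<phi> x" using l(1) b(1) by (simp add: field_simps)
    finally show ?thesis unfolding \<psi>_def smL_def by simp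
  qed
  have "\<psi> \<in> Fun" using psiE psiK unfolding Fun_def Emaps_def Kf_def by auto
  then obtain m where m: "\<psi> = T m" using Fun_T by blast
  have "\<psi> x0 = 1" unfolding \<psi>_def smL_def using b(1) b_def by simp
  then have "\<psi> \<noteq> fzero" unfolding fzero_def by (metis one_neq_zero)
  then have m0: "m \<noteq> 0" using m T_nonzero by simp
  have "\<phi> = smL b \<psi>" unfolding \<psi>_def smL_def using b(1) by (simp add: mult.assoc[symmetric])
  then have "S = Fpt q smL \<psi>" using p(1) Fpt_scale[OF fstruct_L psiE b(1)] by simp
  then show "S \<in> R1 q n" unfolding R1_eq using m m0 by blast
next
  fix S :: "'a mp set set" assume S: "S \<in> R1 q n"
  then obtain l where l: "S = Fpt q smL (T l)" "l \<noteq> 0" unfolding R1_eq by blast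
  have "pimg (frn 1) S = S" using l(1) pimg_Fr_Fpt[OF T_Emaps] T_fixed by simp
  then show "S \<in> {S \<in> spread_of q smL. pimg (frn 1) S = S}" using R1_sub_D1 S by blast
qed

lemma cond_D2_D1: "cond_D2 q n (spread_of q smL) (R1 q n :: 'a mp set set set)"
  unfolding cond_D2_def
proof (intro exI conjI)
  show "fstruct q (smL :: 'a \<Rightarrow> _)" by (rule fstruct_L)
  show "spread_of q smL = spread_of q (smL :: 'a \<Rightarrow> _)" by simp
  show "klin_bij q (frn 1)" by (rule klin_Fr)
  show "simg (frn 1) (spread_of q smL) = spread_of q smL" by (rule simg_Fr_D1)
  show "induced_semilinear q smL (frn 1)" by (rule induced_Fr)
  show "\<forall>S\<in>spread_of q smL. (pimg (frn 1) ^^ n) S = S" by (rule Fr_order)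
  show "\<forall>k. 0 < k \<and> k < n \<longrightarrow> (\<exists>S\<in>spread_of q smL. (pimg (frn 1) ^^ k) S \<noteq> S)"
    using Fr_nonfix by blast
  show "{S \<in> spread_of q smL. pimg (frn 1) S = S} = R1 q n" by (rule Fr_fixed_set)
  show "subgeometry q n smL (R1 q n :: 'a mp set set set)" by (rule subgeometry_R1)
qed

end


context ffs
begin

definition trp :: "'a mp \<Rightarrow> 'a mp" where
  "trp \<phi> = (\<lambda>y. THE l. \<forall>x. trr (l * x) = trr (\<phi> x * y))"

lemma trp_ex: "\<phi> \<in> Emaps q \<Longrightarrow> \<exists>l. \<forall>x. trr (l * x) = trr (\<phi> x * y)"
proof -
  assume p: "\<phi> \<in> Emaps q"
  have "(\<lambda>x. trr (\<phi> x * y)) \<in> Fun"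
    using p unfolding Fun_def Emaps_def
    by (auto simp: distrib_right tr_add tr_in_K mult.assoc tr_Kmult)
  then obtain m where "(\<lambda>x. trr (\<phi> x * y)) = T m" using Fun_T by blast
  then have e: "(\<lambda>x. trr (\<phi> x * y)) = (\<lambda>x. trr (m * x))" unfolding Tm_def .
  have "trr (m * x) = trr (\<phi> x * y)" for x using fun_cong[OF e, of x] by simp
  then show ?thesis by blast
qed

lemma trp_spec: "\<phi> \<in> Emaps q \<Longrightarrow> trr (trp \<phi> y * x) = trr (\<phi> x * y)"
proof -
  assume p: "\<phi> \<in> Emaps q"
  obtain l where l: "\<forall>x. trr (l * x) = trr (\<phi> x * y)" using trp_ex[OF p] by blast
  have "trp \<phi> y = l" unfolding trp_def
  proof (rule the_equality)
    show "\<forall>x. trr (l * x) = trr (\<phi> x * y)" by (rule l)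
    fix l' assume l': "\<forall>x. trr (l' * x) = trr (\<phi> x * y)"
    show "l' = l" by (rule tr_uniq) (use l l' in simp)
  qed
  then show ?thesis using l by simp
qed

lemma trp_uniq:
  assumes p: "\<phi> \<in> Emaps q" and h: "\<And>x y. trr (\<psi> y * x) = trr (\<phi> x * y)"
  shows "trp \<phi> = \<psi>"
proof
  fix y show "trp \<phi> y = \<psi> y" by (rule tr_uniq) (use trp_spec[OF p] h in simp)
qed

lemma trp_Emaps:
  assumes p: "\<phi> \<in> Emaps q"
  shows "trp \<phi> \<in> Emaps q"
  unfolding Emaps_iff
proof (intro conjI allI ballI)
  fix y1 y2 :: 'a
  show "trp \<phi> (y1 + y2) = trp \<phi> y1 + trp \<phi> y2"
    by (rule tr_uniq) (simp add: trp_spec[OF p] distrib_right distrib_left tr_add)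
next
  fix c y :: 'a assume c: "c \<in> KK"
  show "trp \<phi> (c * y) = c * trp \<phi> y"
  proof (rule tr_uniq)
    fix x
    have "trr (trp \<phi> (c * y) * x) = trr (c * (\<phi> x * y))" using trp_spec[OF p] by (simp add: mult.left_commute)
    also have "\<dots> = c * trr (trp \<phi> y * x)" using trp_spec[OF p] tr_Kmult[OF c] by simp
    also have "\<dots> = trr (c * trp \<phi> y * x)" using tr_Kmult[OF c] by (simp add: mult.assoc)
    finally show "trr (trp \<phi> (c * y) * x) = trr (c * trp \<phi> y * x)" .
  qed
qed

lemma trp_trp:
  assumes p: "\<phi> \<in> Emaps q"
  shows "trp (trp \<phi>) = \<phi>"
proof (rule trp_uniq[OF trp_Emaps[OF p]])
  fix x y show "trr (\<phi> y * x) = trr (trp \<phi> x * y)" using trp_spec[OF p, of x y] by simp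
qed

lemma trp_fadd: "\<phi> \<in> Emaps q \<Longrightarrow> \<psi> \<in> Emaps q \<Longrightarrow> trp (fadd \<phi> \<psi>) = fadd (trp \<phi>) (trp \<psi>)"
  by (rule trp_uniq[OF fadd_Emaps]) (simp_all add: fadd_def trp_spec distrib_right tr_add)

lemma trp_kscal: "c \<in> KK \<Longrightarrow> \<phi> \<in> Emaps q \<Longrightarrow> trp (kscal c \<phi>) = kscal c (trp \<phi>)"
  by (rule trp_uniq[OF kscal_Emaps]) (simp_all add: kscal_def trp_spec mult.assoc tr_Kmult)

lemma klin_trp: "klin_bij q trp"
  unfolding klin_bij_def
proof (intro conjI ballI)
  show "bij_betw trp (Emaps q) (Emaps q)"
    by (rule bij_betw_byWitness[where f' = trp]) (auto simp: trp_trp trp_Emaps)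
qed (simp_all add: trp_fadd trp_kscal)

lemma trp_mult: "trp (\<lambda>x. l * x) = (\<lambda>x. l * x)"
proof (rule trp_uniq)
  show "(\<lambda>x. l * x) \<in> Emaps q" unfolding Emaps_iff by (simp add: distrib_left mult.left_commute)
qed (simp add: mult_ac)

lemma trp_R: "trp (\<lambda>x. a * trr (l * x)) = (\<lambda>y. l * trr (a * y))"
proof (rule trp_uniq)
  show "(\<lambda>x. a * trr (l * x)) \<in> Emaps q"
    using fstructD(1)[OF fstruct_L T_Emaps, of a l] unfolding smL_def Tm_def .
  fix x y
  have "trr (l * trr (a * y) * x) = trr (a * y) * trr (l * x)"
    using tr_Kmult[OF tr_in_K[of "a * y"], of "l * x"] by (simp add: mult_ac)
  also have "\<dots> = trr (a * trr (l * x) * y)"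
    using tr_Kmult[OF tr_in_K[of "l * x"], of "a * y"] by (simp add: mult_ac)
  finally show "trr (l * trr (a * y) * x) = trr (a * trr (l * x) * y)" .
qed

lemma pimg_trp_Iset: "pimg trp (Iset q) = Iset q"
proof -
  have "pimg trp (Iset q) = {trp ` pt q (\<lambda>x. l * x) |l. l \<noteq> 0}"
    unfolding pimg_def Iset_def by auto
  also have "\<dots> = Iset q"
  proof -
    have "trp ` pt q (\<lambda>x. l * x) = pt q (\<lambda>x. l * x)" for l
      using klin_img_pt[OF klin_trp, of "\<lambda>x. l * x"] trp_mult[of l]
      unfolding Emaps_iff by (simp add: distrib_left mult.left_commute)
    then show ?thesis unfolding Iset_def by simp
  qed
  finally show ?thesis .
qed

lemma simg_trp_R1: "simg trp (R1 q n) = R2 q n"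
proof -
  have e: "pimg trp {pt q (\<lambda>x. a * tr q n (l * x)) |a. a \<noteq> 0} = {pt q (\<lambda>x. l * tr q n (a * x)) |a. a \<noteq> 0}" for l
  proof -
    have "trp ` pt q (\<lambda>x. a * trr (l * x)) = pt q (\<lambda>y. l * trr (a * y))" for a
      using klin_img_pt[OF klin_trp, of "\<lambda>x. a * trr (l * x)"] trp_R[of a l]
        fstructD(1)[OF fstruct_L T_Emaps, of a l] unfolding smL_def Tm_def by simp
    then show ?thesis unfolding pimg_def by auto
  qed
  show ?thesis unfolding simg_def R1_def R2_def image_def using e by auto
qed

end


lemma pt_inj_klin:
  fixes h :: "'a::{finite,field} mp \<Rightarrow> 'a mp"
  assumes h: "klin_bij q h" and p: "\<phi> \<in> Emaps q" "\<psi> \<in> Emaps q" and e: "pt q (h \<phi>) = pt q (h \<psi>)"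
  shows "pt q \<phi> = pt q \<psi>"
proof -
  obtain c where c: "c \<in> Kf q" "c \<noteq> 0" "h \<psi> = kscal c (h \<phi>)" using pt_eq[OF e] by blast
  then have "h \<psi> = h (kscal c \<phi>)" using klinD(3)[OF h c(1) p(1)] by simp
  then have "\<psi> = kscal c \<phi>" using klin_inj[OF h p(2) kscal_Emaps[OF p(1) c(1)]] by simp
  then show ?thesis using pt_kscal[OF c(1,2)] by simp
qed

lemma img_Points:
  fixes h :: "'a::{finite,field} mp \<Rightarrow> 'a mp"
  assumes h: "klin_bij q h"
  shows "bij_betw (\<lambda>p. h ` p) (Points q) (Points q)"
  unfolding bij_betw_def
proof
  show "inj_on (\<lambda>p. h ` p) (Points q)"
  proof (rule inj_onI)
    fix p p' :: "'a mp set" assume a: "p \<in> Points q" "p' \<in> Points q" "h ` p = h ` p'"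
    obtain \<phi> where \<phi>: "p = pt q \<phi>" "\<phi> \<in> Emaps q" using a(1) unfolding Points_def by blast
    obtain \<psi> where \<psi>: "p' = pt q \<psi>" "\<psi> \<in> Emaps q" using a(2) unfolding Points_def by blast
    have "pt q (h \<phi>) = pt q (h \<psi>)" using a(3) \<phi> \<psi> klin_img_pt[OF h] by simp
    then show "p = p'" using pt_inj_klin[OF h \<phi>(2) \<psi>(2)] \<phi> \<psi> by simp
  qed
  show "(\<lambda>p. h ` p) ` Points q = Points q"
  proof (intro equalityI subsetI)
    fix x :: "'a mp set" assume "x \<in> (\<lambda>p. h ` p) ` Points q"
    then obtain \<phi> where \<phi>: "x = h ` pt q \<phi>" "\<phi> \<in> Emaps q" "\<phi> \<noteq> fzero" unfolding Points_def by blast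
    then have "x = pt q (h \<phi>)" using klin_img_pt[OF h] by simp
    moreover have "h \<phi> \<in> Emaps q" "h \<phi> \<noteq> fzero" using klinD(4)[OF h \<phi>(2)] klin_fzero_iff[OF h \<phi>(2)] \<phi>(3) by auto
    ultimately show "x \<in> Points q" unfolding Points_def by blast
  next
    fix x :: "'a mp set" assume "x \<in> Points q"
    then obtain \<psi> where \<psi>: "x = pt q \<psi>" "\<psi> \<in> Emaps q" "\<psi> \<noteq> fzero" unfolding Points_def by blast
    let ?\<phi> = "ginv q h \<psi>"
    have ph: "?\<phi> \<in> Emaps q" "h ?\<phi> = \<psi>" using ginv_props[OF h] \<psi>(2) by auto
    have "?\<phi> \<noteq> fzero" using ph \<psi>(3) klin_fzero[OF h] by auto
    then have "pt q ?\<phi> \<in> Points q" unfolding Points_def using ph by blast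
    moreover have "x = h ` pt q ?\<phi>" using klin_img_pt[OF h ph(1)] ph(2) \<psi>(1) by simp
    ultimately show "x \<in> (\<lambda>p. h ` p) ` Points q" by blast
  qed
qed

lemma img_line_pt:
  fixes h :: "'a::{finite,field} mp \<Rightarrow> 'a mp"
  assumes h: "klin_bij q h" and p: "\<phi> \<in> Emaps q" "\<psi> \<in> Emaps q" and ab: "a \<in> Kf q" "b \<in> Kf q"
  shows "h ` pt q (fadd (kscal a \<phi>) (kscal b \<psi>)) = pt q (fadd (kscal a (h \<phi>)) (kscal b (h \<psi>)))"
proof -
  have E: "fadd (kscal a \<phi>) (kscal b \<psi>) \<in> Emaps q"
    by (rule fadd_Emaps[OF kscal_Emaps[OF p(1) ab(1)] kscal_Emaps[OF p(2) ab(2)]])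
  have "h (fadd (kscal a \<phi>) (kscal b \<psi>)) = fadd (kscal a (h \<phi>)) (kscal b (h \<psi>))"
    using klinD(2)[OF h kscal_Emaps[OF p(1) ab(1)] kscal_Emaps[OF p(2) ab(2)]]
      klinD(3)[OF h ab(1) p(1)] klinD(3)[OF h ab(2) p(2)] by simp
  then show ?thesis using klin_img_pt[OF h E] by simp
qed

lemma img_Lines:
  fixes h :: "'a::{finite,field} mp \<Rightarrow> 'a mp"
  assumes h: "klin_bij q h" and L: "L \<in> Lines q"
  shows "(\<lambda>p. h ` p) ` L \<in> Lines q"
proof -
  obtain \<phi> \<psi> where pp: "\<phi> \<in> Emaps q" "\<psi> \<in> Emaps q" "\<phi> \<noteq> fzero" "\<psi> \<noteq> fzero" "pt q \<phi> \<noteq> pt q \<psi>"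
    and L: "L = {pt q (fadd (kscal a \<phi>) (kscal b \<psi>)) | a b. a \<in> Kf q \<and> b \<in> Kf q \<and> (a \<noteq> 0 \<or> b \<noteq> 0)}"
    using L unfolding Lines_def by blast
  have img: "(\<lambda>p. h ` p) ` L = {pt q (fadd (kscal a (h \<phi>)) (kscal b (h \<psi>))) | a b. a \<in> Kf q \<and> b \<in> Kf q \<and> (a \<noteq> 0 \<or> b \<noteq> 0)}"
  proof (intro equalityI subsetI)
    fix x assume "x \<in> (\<lambda>p. h ` p) ` L"
    then obtain a b where ab: "a \<in> Kf q" "b \<in> Kf q" "a \<noteq> 0 \<or> b \<noteq> 0"
      "x = h ` pt q (fadd (kscal a \<phi>) (kscal b \<psi>))" unfolding L by blast
    then have "x = pt q (fadd (kscal a (h \<phi>)) (kscal b (h \<psi>)))" using img_line_pt[OF h pp(1,2)] by simp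
    then show "x \<in> {pt q (fadd (kscal a (h \<phi>)) (kscal b (h \<psi>))) | a b. a \<in> Kf q \<and> b \<in> Kf q \<and> (a \<noteq> 0 \<or> b \<noteq> 0)}"
      using ab by blast
  next
    fix x assume "x \<in> {pt q (fadd (kscal a (h \<phi>)) (kscal b (h \<psi>))) | a b. a \<in> Kf q \<and> b \<in> Kf q \<and> (a \<noteq> 0 \<or> b \<noteq> 0)}"
    then obtain a b where ab: "a \<in> Kf q" "b \<in> Kf q" "a \<noteq> 0 \<or> b \<noteq> 0"
      "x = pt q (fadd (kscal a (h \<phi>)) (kscal b (h \<psi>)))" by blast
    then have "x = h ` pt q (fadd (kscal a \<phi>) (kscal b \<psi>))" using img_line_pt[OF h pp(1,2)] by simp
    moreover have "pt q (fadd (kscal a \<phi>) (kscal b \<psi>)) \<in> L" unfolding L using ab by blast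
    ultimately show "x \<in> (\<lambda>p. h ` p) ` L" by blast
  qed
  have "h \<phi> \<in> Emaps q" "h \<psi> \<in> Emaps q" using klinD(4)[OF h] pp by auto
  moreover have "h \<phi> \<noteq> fzero" "h \<psi> \<noteq> fzero" using klin_fzero_iff[OF h] pp by auto
  moreover have "pt q (h \<phi>) \<noteq> pt q (h \<psi>)" using pt_inj_klin[OF h pp(1,2)] pp(5) by blast
  ultimately show ?thesis unfolding img Lines_def by blast
qed

lemma collineation_img:
  fixes h :: "'a::{finite,field} mp \<Rightarrow> 'a mp"
  assumes h: "klin_bij q h"
  shows "collineation q (\<lambda>p. h ` p)"
  unfolding collineation_def using img_Points[OF h] img_Lines[OF h] by blast


context ffs
begin

lemma trp_img_Iset: "p \<in> (Iset q :: 'a mp set set) \<Longrightarrow> trp ` p = p"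
proof -
  assume "p \<in> Iset q"
  then obtain l :: 'a where l: "p = pt q (\<lambda>x. l * x)" unfolding Iset_def by blast
  have E: "(\<lambda>x. l * x) \<in> Emaps q" unfolding Emaps_iff by (simp add: distrib_left mult.left_commute)
  show ?thesis using klin_img_pt[OF klin_trp E] trp_mult[of l] l by simp
qed

lemma Iset_Pow: "(Iset q :: 'a mp set set) \<subseteq> Pow (Emaps q)"
proof
  fix p :: "'a mp set" assume "p \<in> Iset q"
  then obtain l :: 'a where l: "p = pt q (\<lambda>x. l * x)" unfolding Iset_def by blast
  have E: "(\<lambda>x. l * x) \<in> Emaps q" unfolding Emaps_iff by (simp add: distrib_left mult.left_commute)
  show "p \<in> Pow (Emaps q)" using pt_subset[OF E] l by simp
qed

lemma exists_nonsym: "\<exists>\<phi>. \<phi> \<in> Emaps q \<and> \<phi> \<noteq> fzero \<and> pt q (trp \<phi>) \<noteq> pt q \<phi>"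
proof -
  have "KK \<noteq> UNIV"
  proof
    assume "KK = UNIV"
    then have "card (UNIV :: 'a set) = q" using card_K by simp
    then show False using cardF qn_gt n2 q2 by (metis less_le_trans one_less_numeral_iff power_one_right
      power_strict_increasing_iff semiring_norm(76) Suc_1 Suc_le_eq less_imp_le_nat nat_less_le)
  qed
  then obtain l :: 'a where l: "l \<notin> KK" by blast
  have lz: "l \<noteq> 0" using l subf_K unfolding subf_def by auto
  let ?\<phi> = "T l"
  have tp: "trp ?\<phi> = (\<lambda>y. l * trr y)"
    using trp_R[of 1 l] unfolding Tm_def by simp
  have "pt q (trp ?\<phi>) \<noteq> pt q ?\<phi>"
  proof
    assume "pt q (trp ?\<phi>) = pt q ?\<phi>"
    then obtain c where c: "c \<in> KK" "c \<noteq> 0" "?\<phi> = kscal c (trp ?\<phi>)" using pt_eq by blast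
    obtain y where y: "trr y \<noteq> 0" using tr_nonzero by blast
    have "trr (l * y) = c * (l * trr y)" using fun_cong[OF c(3), of y] tp unfolding Tm_def kscal_def by simp
    then have "l = inverse (c * trr y) * trr (l * y)" using y c(2) by (simp add: field_simps)
    moreover have "inverse (c * trr y) * trr (l * y) \<in> KK"
      using subf_K c(1) tr_in_K unfolding subf_def by auto
    ultimately show False using l by simp
  qed
  then show ?thesis using T_Emaps T_nonzero lz by blast
qed

end


theorem theorem5p2:
  fixes q n :: nat and X :: "('a::{finite,field} \<Rightarrow> 'a) set set"
  assumes "n \<ge> 2" and "q \<ge> 2" and "card (UNIV :: 'a set) = q ^ n" and "D_subspace q n X"
  shows "\<exists>D1 D2. desarg_spread q D1 \<and> desarg_spread q D2 \<and>
           X \<in> D1 \<and> X \<in> D2 \<and> R1 q n \<subseteq> D1 \<and> R2 q n \<subseteq> D2 \<and>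
           cond_D2 q n D1 (R1 q n) \<and> cond_D2 q n D2 (R2 q n) \<and>
           (\<exists>\<Phi>. involutory_collineation q \<Phi> \<and> (\<forall>x\<in>X. \<Phi> x = x) \<and> (\<lambda>S. \<Phi> ` S) ` D1 = D2)"
proof -
  interpret ffs q n "TYPE('a)" by unfold_locales (use assms in auto)
  obtain f where fH: "H_Segre q n f" and X: "X = pimg f (Iset q)"
    using assms(4) unfolding D_subspace_def by blast
  have fk: "klin_bij q f" and fR1: "simg f (R1 q n) = R1 q n" and fR2: "simg f (R2 q n) = R2 q n"
    using fH unfolding H_Segre_def by auto
  define D1I :: "'a mp set set set" where "D1I = spread_of q smL"
  define D1 where "D1 = simg f D1I"
  define D2 where "D2 = simg f (simg trp D1I)"
  have D1IP: "D1I \<subseteq> Pow (Pow (Emaps q))" unfolding D1I_def by (rule spread_Pow[OF fstruct_L])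
  have trpR1: "simg trp (R1 q n) = (R2 q n :: 'a mp set set set)" by (rule simg_trp_R1)
  have "desarg_spread q D1" unfolding D1_def D1I_def by (rule desarg_T[OF fk fstruct_L])
  moreover have "desarg_spread q D2"
  proof -
    have "simg trp D1I = spread_of q (smT q trp smL)" unfolding D1I_def using spread_T[OF klin_trp fstruct_L] by simp
    then show ?thesis unfolding D2_def using desarg_T[OF fk fstruct_T[OF klin_trp fstruct_L]] by simp
  qed
  moreover have "X \<in> D1" unfolding D1_def X simg_def D1I_def using Iset_in_D1 by blast
  moreover have "X \<in> D2"
  proof -
    have "Iset q = pimg trp (Iset q)" using pimg_trp_Iset by simp
    then have "Iset q \<in> simg trp D1I" unfolding simg_def D1I_def using Iset_in_D1 by (metis imageI)
    then show ?thesis unfolding D2_def X simg_def by blast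
  qed
  moreover have "R1 q n \<subseteq> D1"
    unfolding D1_def D1I_def using image_mono[OF R1_sub_D1, of "pimg f"] fR1 unfolding simg_def by simp
  moreover have "R2 q n \<subseteq> D2"
  proof -
    have "R2 q n \<subseteq> simg trp D1I" unfolding D1I_def simg_def using image_mono[OF R1_sub_D1, of "pimg trp"] trpR1
      unfolding simg_def by simp
    then show ?thesis unfolding D2_def using image_mono[of _ _ "pimg f"] fR2 unfolding simg_def by metis
  qed
  moreover have "cond_D2 q n D1 (R1 q n)"
    using cond_D2_T[OF fk cond_D2_D1] fR1 unfolding D1_def D1I_def by simp
  moreover have "cond_D2 q n D2 (R2 q n)"
  proof -
    have "cond_D2 q n (simg trp D1I) (R2 q n)"
      using cond_D2_T[OF klin_trp cond_D2_D1] trpR1 unfolding D1I_def by simp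
    from cond_D2_T[OF fk this] show ?thesis unfolding D2_def using fR2 by simp
  qed
  moreover have "\<exists>\<Phi>. involutory_collineation q \<Phi> \<and> (\<forall>x\<in>X. \<Phi> x = x) \<and> (\<lambda>S. \<Phi> ` S) ` D1 = D2"
  proof -
    define h where "h = conj_f q f trp"
    have hk: "klin_bij q h" unfolding h_def by (rule klin_conj[OF fk klin_trp])
    note gi = ginv_props[OF fk]
    have hf: "h (f \<phi>) = f (trp \<phi>)" if "\<phi> \<in> Emaps q" for \<phi>
      unfolding h_def conj_f_def using gi(3)[OF that] by simp
    have hh: "h (h \<phi>) = \<phi>" if "\<phi> \<in> Emaps q" for \<phi>
    proof -
      have "h (h \<phi>) = h (f (trp (ginv q f \<phi>)))" unfolding h_def conj_f_def ..
      also have "\<dots> = f (trp (trp (ginv q f \<phi>)))" using hf trp_Emaps gi(1) that by simp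
      also have "\<dots> = \<phi>" using trp_trp gi(1,2) that by simp
      finally show ?thesis .
    qed
    define \<Phi> where "\<Phi> = (\<lambda>p. h ` p)"
    have "involutory_collineation q \<Phi>"
      unfolding involutory_collineation_def
    proof (intro conjI ballI)
      show "collineation q \<Phi>" unfolding \<Phi>_def by (rule collineation_img[OF hk])
    next
      fix x :: "'a mp set" assume "x \<in> Points q"
      then obtain \<phi> where "x = pt q \<phi>" "\<phi> \<in> Emaps q" unfolding Points_def by blast
      then have xE: "x \<subseteq> Emaps q" using pt_subset by blast
      have "(\<lambda>y. h (h y)) ` x = (\<lambda>y. y) ` x" by (rule image_cong[OF refl]) (use hh xE in auto)
      then show "\<Phi> (\<Phi> x) = x" unfolding \<Phi>_def image_image by simp
    next
      obtain \<phi> where \<phi>: "\<phi> \<in> Emaps q" "\<phi> \<noteq> fzero" "pt q (trp \<phi>) \<noteq> pt q \<phi>" using exists_nonsym by blast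
      have fp: "f \<phi> \<in> Emaps q" "f \<phi> \<noteq> fzero" using klinD(4)[OF fk \<phi>(1)] klin_fzero_iff[OF fk \<phi>(1)] \<phi>(2) by auto
      have "pt q (f \<phi>) \<in> Points q" unfolding Points_def using fp by blast
      moreover have "\<Phi> (pt q (f \<phi>)) \<noteq> pt q (f \<phi>)"
      proof
        assume "\<Phi> (pt q (f \<phi>)) = pt q (f \<phi>)"
        then have "pt q (f (trp \<phi>)) = pt q (f \<phi>)"
          unfolding \<Phi>_def using klin_img_pt[OF hk fp(1)] hf[OF \<phi>(1)] by simp
        then have "pt q (trp \<phi>) = pt q \<phi>" using pt_inj_klin[OF fk trp_Emaps[OF \<phi>(1)] \<phi>(1)] by simp
        with \<phi>(3) show False by simp
      qed
      ultimately show "\<exists>x\<in>Points q. \<Phi> x \<noteq> x" by blast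
    qed
    moreover have "\<forall>x\<in>X. \<Phi> x = x"
    proof
      fix x :: "'a mp set" assume "x \<in> X"
      then obtain p where p: "p \<in> Iset q" "x = f ` p" unfolding X pimg_def by blast
      have pE: "p \<subseteq> Emaps q" using Iset_Pow p(1) by blast
      have "\<Phi> x = (\<lambda>y. h (f y)) ` p" unfolding \<Phi>_def p(2) image_image ..
      also have "\<dots> = (\<lambda>y. f (trp y)) ` p" using hf pE by (intro image_cong) auto
      also have "\<dots> = f ` (trp ` p)" by (simp add: image_image)
      also have "\<dots> = x" using trp_img_Iset[OF p(1)] p(2) by simp
      finally show "\<Phi> x = x" .
    qed
    moreover have "(\<lambda>S. \<Phi> ` S) ` D1 = D2"
    proof -
      have "(\<lambda>S. \<Phi> ` S) ` D1 = simg h D1" unfolding \<Phi>_def simg_def pimg_def ..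
      also have "\<dots> = simg f (simg trp D1I)"
        unfolding D1_def simg_def image_image h_def using pimg_conj[OF fk] D1IP
        by (intro image_cong) auto
      finally show ?thesis unfolding D2_def .
    qed
    ultimately show ?thesis by blast
  qed
  ultimately show ?thesis by blast
qed


end
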